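(* For each $\Lambda\in\{\mathsf{CS4},\mathsf{GS4},\mathsf{S4I}\}$ and every formula $\varphi$: $\Lambda\vdash\varphi$ if and only if $\mathcal M\models\varphi$ for every $\Lambda$-model $\mathcal M$.
   Context: Fix a countably infinite set $\mathbb P$ of propositional variables. Formulas: $\varphi,\psi ::= p\mid\bot\mid(\varphi\wedge\psi)\mid(\varphi\vee\psi)\mid(\varphi\to\psi)\mid\Diamond\varphi\mid\Box\varphi$; $\neg\varphi:=\varphi\to\bot$. A bi-intuitionistic frame is $(W,W_\bot,\preccurlyeq,\sqsubseteq)$ with $\preccurlyeq,\sqsubseteq$ preorders on $W$ and $W_\bot\subseteq W$ upward closed under both; infallible if $W_\bot=\varnothing$. A valuation $V:\mathbb P\to 2^W$ has each $V(p)$ upward closed under $\preccurlyeq$ and containing $W_\bot$; a model is $\mathcal M=(W,W_\bot,\preccurlyeq,\sqsubseteq,V)$. Satisfaction: $p$ iff $w\in V(p)$; $\bot$ iff $w\in W_\bot$; $\wedge,\vee$ pointwise; $w\models\varphi\to\psi$ iff for all $v\succcurlyeq w$, $v\models\varphi$ implies $v\models\psi$; $w\models\Diamond\varphi$ iff for all $u\succcurlyeq w$ there is $v\sqsupseteq u$ with $v\models\varphi$; $w\models\Box\varphi$ iff $v\models\varphi$ whenever $w\preccurlyeq u\sqsubseteq v$. $\mathcal M\models\varphi$ iff $\varphi$ holds at every $w\in W\setminus W_\bot$. $\sqsubseteq$ is forward confluent if $w\preccurlyeq w'$, $w\sqsubseteq v$ imply some $v'$ with $v\preccurlyeq v'$,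 $w'\sqsubseteq v'$; backward confluent if $w\sqsubseteq v\preccurlyeq v'$ implies some $w'$ with $w\preccurlyeq w'\sqsubseteq v'$; downward confluent if $w\preccurlyeq v\sqsubseteq v'$ implies some $w'$ with $w\sqsubseteq w'\preccurlyeq v'$. Locally linear: $w\preccurlyeq u$, $w\preccurlyeq v$ imply $u\preccurlyeq v$ or $v\preccurlyeq u$. $\mathsf{CS4}$-frames: backward confluent bi-intuitionistic frames. $\mathsf{GS4}$-frames: infallible, locally linear, forward and backward confluent. $\mathsf{S4I}$-frames: infallible, forward and downward confluent. A $\Lambda$-model is a model on a $\Lambda$-frame. $\mathsf{CS4}$ is the least set of formulas containing all intuitionistic propositional tautologies and all instances of $\Box(\varphi\to\psi)\to(\Box\varphi\to\Box\psi)$, $\Box(\varphi\to\psi)\to(\Diamond\varphi\to\Diamond\psi)$, $\Box\varphi\to\varphi$, $\varphi\to\Diamond\varphi$, $\Box\varphi\to\Box\Box\varphi$, $\Diamond\Diamond\varphi\to\Diamond\varphi$, closed under modus ponens and necessitation. Axioms: (FS) $(\Diamond\varphi\to\Box\psi)\to\Box(\varphi\to\psi)$; (DP) $\Diamond(\varphi\vee\psi)\to\Diamond\varphi\vee\Diamond\psi$; (N) $\neg\Diamond\bot$; (CD) $\Box(\varphi\vee\psi)\to\Box\varphi\vee\Diamond\psi$; (GD) $(\varphi\to\psi)\vee(\psi\to\varphi)$. $\mathsf{GS4}=\mathsf{CS4}+\mathrm{FS}+\mathrm{DP}+\mathrm N+\mathrm{GD}$ and $\mathsf{S4I}=\mathsf{CS4}+\mathrm{DP}+\mathrm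 N+\mathrm{CD}$ (adding all instances, closed under the same rules). *)

theory Defs
  imports Main
begin

datatype form =
    Var nat
  | Bot
  | And form form
  | Or form form
  | Imp form form
  | Dia form
  | Box form

definition Neg :: "form \<Rightarrow> form" where
  "Neg \<phi> = Imp \<phi> Bot"

datatype logic = CS4 | GS4 | S4I

text \<open>Intuitionistic propositional tautologies (in the modal language) are given by
the standard complete Hilbert axiomatisation of IPC, instantiated with arbitrary
modal formulas; since the logics are closed under modus ponens this yields exactly
all substitution instances of intuitionistic propositional tautologies.\<close>

inductive ipc_axiom :: "form \<Rightarrow> bool" where
  ipcK:    "ipc_axiom (Imp \<phi> (Imp \<psi> \<phi>))"
| ipcS:    "ipc_axiom (Imp (Imp \<phi> (Imp \<psi> \<chi>)) (Imp (Imp \<phi> \<psi>) (Imp \<phi> \<chi>)))"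
| ipcC1:   "ipc_axiom (Imp (And \<phi> \<psi>) \<phi>)"
| ipcC2:   "ipc_axiom (Imp (And \<phi> \<psi>) \<psi>)"
| ipcCI:   "ipc_axiom (Imp \<phi> (Imp \<psi> (And \<phi> \<psi>)))"
| ipcD1:   "ipc_axiom (Imp \<phi> (Or \<phi> \<psi>))"
| ipcD2:   "ipc_axiom (Imp \<psi> (Or \<phi> \<psi>))"
| ipcDE:   "ipc_axiom (Imp (Imp \<phi> \<chi>) (Imp (Imp \<psi> \<chi>) (Imp (Or \<phi> \<psi>) \<chi>)))"
| ipcEFQ:  "ipc_axiom (Imp Bot \<phi>)"

inductive cs4_axiom :: "form \<Rightarrow> bool" where
  axK:   "cs4_axiom (Imp (Box (Imp \<phi> \<psi>)) (Imp (Box \<phi>) (Box \<psi>)))"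
| axKd:  "cs4_axiom (Imp (Box (Imp \<phi> \<psi>)) (Imp (Dia \<phi>) (Dia \<psi>)))"
| axT:   "cs4_axiom (Imp (Box \<phi>) \<phi>)"
| axTd:  "cs4_axiom (Imp \<phi> (Dia \<phi>))"
| ax4:   "cs4_axiom (Imp (Box \<phi>) (Box (Box \<phi>)))"
| ax4d:  "cs4_axiom (Imp (Dia (Dia \<phi>)) (Dia \<phi>))"

definition FS_ax :: "form \<Rightarrow> bool" where
  "FS_ax \<chi> \<longleftrightarrow> (\<exists>\<phi> \<psi>. \<chi> = Imp (Imp (Dia \<phi>) (Box \<psi>)) (Box (Imp \<phi> \<psi>)))"

definition DP_ax :: "form \<Rightarrow> bool" where
  "DP_ax \<chi> \<longleftrightarrow> (\<exists>\<phi> \<psi>. \<chi> = Imp (Dia (Or \<phi> \<psi>)) (Or (Dia \<phi>) (Dia \<psi>)))"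

definition N_ax :: "form \<Rightarrow> bool" where
  "N_ax \<chi> \<longleftrightarrow> \<chi> = Neg (Dia Bot)"

definition CD_ax :: "form \<Rightarrow> bool" where
  "CD_ax \<chi> \<longleftrightarrow> (\<exists>\<phi> \<psi>. \<chi> = Imp (Box (Or \<phi> \<psi>)) (Or (Box \<phi>) (Dia \<psi>)))"

definition GD_ax :: "form \<Rightarrow> bool" where
  "GD_ax \<chi> \<longleftrightarrow> (\<exists>\<phi> \<psi>. \<chi> = Or (Imp \<phi> \<psi>) (Imp \<psi> \<phi>))"

fun extra_axiom :: "logic \<Rightarrow> form \<Rightarrow> bool" where
  "extra_axiom CS4 \<chi> = False"
| "extra_axiom GS4 \<chi> = (FS_ax \<chi> \<or> DP_ax \<chi> \<or> N_ax \<chi> \<or> GD_ax \<chi>)"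
| "extra_axiom S4I \<chi> = (DP_ax \<chi> \<or> N_ax \<chi> \<or> CD_ax \<chi>)"

inductive prov :: "logic \<Rightarrow> form \<Rightarrow> bool" for L :: logic where
  ipc:   "ipc_axiom \<phi> \<Longrightarrow> prov L \<phi>"
| cs4:   "cs4_axiom \<phi> \<Longrightarrow> prov L \<phi>"
| extra: "extra_axiom L \<phi> \<Longrightarrow> prov L \<phi>"
| mp:    "prov L (Imp \<phi> \<psi>) \<Longrightarrow> prov L \<phi> \<Longrightarrow> prov L \<psi>"
| nec:   "prov L \<phi> \<Longrightarrow> prov L (Box \<phi>)"

text \<open>A model is given by its carrier W, the fallible worlds Wb, the intuitionistic
preorder R (\<preccurlyeq>), the modal preorder S (\<sqsubseteq>) and a valuation V.
Relations are only considered on W.\<close>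

definition preorder_on :: "'w set \<Rightarrow> ('w \<Rightarrow> 'w \<Rightarrow> bool) \<Rightarrow> bool" where
  "preorder_on W R \<longleftrightarrow> (\<forall>x\<in>W. R x x) \<and>
     (\<forall>x\<in>W. \<forall>y\<in>W. \<forall>z\<in>W. R x y \<longrightarrow> R y z \<longrightarrow> R x z)"

definition up_closed :: "'w set \<Rightarrow> ('w \<Rightarrow> 'w \<Rightarrow> bool) \<Rightarrow> 'w set \<Rightarrow> bool" where
  "up_closed W R A \<longleftrightarrow> (\<forall>x\<in>A. \<forall>y\<in>W. R x y \<longrightarrow> y \<in> A)"

definition bi_frame ::
  "'w set \<Rightarrow> 'w set \<Rightarrow> ('w \<Rightarrow> 'w \<Rightarrow> bool) \<Rightarrow> ('w \<Rightarrow> 'w \<Rightarrow> bool) \<Rightarrow> bool" where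
  "bi_frame W Wb R S \<longleftrightarrow> preorder_on W R \<and> preorder_on W S \<and> Wb \<subseteq> W \<and>
     up_closed W R Wb \<and> up_closed W S Wb"

definition valuation ::
  "'w set \<Rightarrow> 'w set \<Rightarrow> ('w \<Rightarrow> 'w \<Rightarrow> bool) \<Rightarrow> (nat \<Rightarrow> 'w set) \<Rightarrow> bool" where
  "valuation W Wb R V \<longleftrightarrow> (\<forall>p. V p \<subseteq> W \<and> up_closed W R (V p) \<and> Wb \<subseteq> V p)"

primrec sat ::
  "'w set \<Rightarrow> 'w set \<Rightarrow> ('w \<Rightarrow> 'w \<Rightarrow> bool) \<Rightarrow> ('w \<Rightarrow> 'w \<Rightarrow> bool) \<Rightarrow> (nat \<Rightarrow> 'w set)
    \<Rightarrow> 'w \<Rightarrow> form \<Rightarrow> bool" where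
  "sat W Wb R S V w (Var p) = (w \<in> V p)"
| "sat W Wb R S V w Bot = (w \<in> Wb)"
| "sat W Wb R S V w (And \<phi> \<psi>) = (sat W Wb R S V w \<phi> \<and> sat W Wb R S V w \<psi>)"
| "sat W Wb R S V w (Or \<phi> \<psi>) = (sat W Wb R S V w \<phi> \<or> sat W Wb R S V w \<psi>)"
| "sat W Wb R S V w (Imp \<phi> \<psi>) =
     (\<forall>v\<in>W. R w v \<longrightarrow> sat W Wb R S V v \<phi> \<longrightarrow> sat W Wb R S V v \<psi>)"
| "sat W Wb R S V w (Dia \<phi>) =
     (\<forall>u\<in>W. R w u \<longrightarrow> (\<exists>v\<in>W. S u v \<and> sat W Wb R S V v \<phi>))"
| "sat W Wb R S V w (Box \<phi>) =
     (\<forall>u\<in>W. \<forall>v\<in>W. R w u \<longrightarrow> S u v \<longrightarrow> sat W Wb R S V v \<phi>)"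

definition model_valid ::
  "'w set \<Rightarrow> 'w set \<Rightarrow> ('w \<Rightarrow> 'w \<Rightarrow> bool) \<Rightarrow> ('w \<Rightarrow> 'w \<Rightarrow> bool) \<Rightarrow> (nat \<Rightarrow> 'w set)
    \<Rightarrow> form \<Rightarrow> bool" where
  "model_valid W Wb R S V \<phi> \<longleftrightarrow> (\<forall>w\<in>W - Wb. sat W Wb R S V w \<phi>)"

definition forward_confluent :: "'w set \<Rightarrow> ('w \<Rightarrow> 'w \<Rightarrow> bool) \<Rightarrow> ('w \<Rightarrow> 'w \<Rightarrow> bool) \<Rightarrow> bool" where
  "forward_confluent W R S \<longleftrightarrow> (\<forall>w\<in>W. \<forall>w'\<in>W. \<forall>v\<in>W. R w w' \<longrightarrow> S w v \<longrightarrow>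
      (\<exists>v'\<in>W. R v v' \<and> S w' v'))"

definition backward_confluent :: "'w set \<Rightarrow> ('w \<Rightarrow> 'w \<Rightarrow> bool) \<Rightarrow> ('w \<Rightarrow> 'w \<Rightarrow> bool) \<Rightarrow> bool" where
  "backward_confluent W R S \<longleftrightarrow> (\<forall>w\<in>W. \<forall>v\<in>W. \<forall>v'\<in>W. S w v \<longrightarrow> R v v' \<longrightarrow>
      (\<exists>w'\<in>W. R w w' \<and> S w' v'))"

definition downward_confluent :: "'w set \<Rightarrow> ('w \<Rightarrow> 'w \<Rightarrow> bool) \<Rightarrow> ('w \<Rightarrow> 'w \<Rightarrow> bool) \<Rightarrow> bool" where
  "downward_confluent W R S \<longleftrightarrow> (\<forall>w\<in>W. \<forall>v\<in>W. \<forall>v'\<in>W. R w v \<longrightarrow> S v v' \<longrightarrow>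
      (\<exists>w'\<in>W. S w w' \<and> R w' v'))"

definition locally_linear :: "'w set \<Rightarrow> ('w \<Rightarrow> 'w \<Rightarrow> bool) \<Rightarrow> bool" where
  "locally_linear W R \<longleftrightarrow> (\<forall>w\<in>W. \<forall>u\<in>W. \<forall>v\<in>W. R w u \<longrightarrow> R w v \<longrightarrow> R u v \<or> R v u)"

fun logic_frame ::
  "logic \<Rightarrow> 'w set \<Rightarrow> 'w set \<Rightarrow> ('w \<Rightarrow> 'w \<Rightarrow> bool) \<Rightarrow> ('w \<Rightarrow> 'w \<Rightarrow> bool) \<Rightarrow> bool" where
  "logic_frame CS4 W Wb R S = (bi_frame W Wb R S \<and> backward_confluent W R S)"
| "logic_frame GS4 W Wb R S = (bi_frame W Wb R S \<and> Wb = {} \<and> locally_linear W R \<and>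
      forward_confluent W R S \<and> backward_confluent W R S)"
| "logic_frame S4I W Wb R S = (bi_frame W Wb R S \<and> Wb = {} \<and>
      forward_confluent W R S \<and> downward_confluent W R S)"

definition valid_in :: "'w itself \<Rightarrow> logic \<Rightarrow> form \<Rightarrow> bool" where
  "valid_in (T :: 'w itself) L \<phi> \<longleftrightarrow>
     (\<forall>(W :: 'w set) Wb R S V. logic_frame L W Wb R S \<longrightarrow> valuation W Wb R V \<longrightarrow>
        model_valid W Wb R S V \<phi>)"

end

theory Submission
  imports Defs
begin


inductive der :: "logic \<Rightarrow> form set \<Rightarrow> form \<Rightarrow> bool" for L where
  dprov: "prov L \<phi> \<Longrightarrow> der L \<Gamma> \<phi>"
| dassm: "\<phi> \<in> \<Gamma> \<Longrightarrow> der L \<Gamma> \<phi>"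
| dmp: "der L \<Gamma> (Imp \<phi> \<psi>) \<Longrightarrow> der L \<Gamma> \<phi> \<Longrightarrow> der L \<Gamma> \<psi>"

lemma pK: "prov L (Imp a (Imp b a))" by (intro prov.ipc ipc_axiom.intros)
lemma pS: "prov L (Imp (Imp a (Imp b c)) (Imp (Imp a b) (Imp a c)))" by (intro prov.ipc ipc_axiom.intros)
lemma pC1: "prov L (Imp (And a b) a)" by (intro prov.ipc ipc_axiom.intros)
lemma pC2: "prov L (Imp (And a b) b)" by (intro prov.ipc ipc_axiom.intros)
lemma pCI: "prov L (Imp a (Imp b (And a b)))" by (intro prov.ipc ipc_axiom.intros)
lemma pD1: "prov L (Imp a (Or a b))" by (intro prov.ipc ipc_axiom.intros)
lemma pD2: "prov L (Imp b (Or a b))" by (intro prov.ipc ipc_axiom.intros)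
lemma pDE: "prov L (Imp (Imp a c) (Imp (Imp b c) (Imp (Or a b) c)))" by (intro prov.ipc ipc_axiom.intros)
lemma pEFQ: "prov L (Imp Bot a)" by (intro prov.ipc ipc_axiom.intros)
lemma pBK: "prov L (Imp (Box (Imp a b)) (Imp (Box a) (Box b)))" by (intro prov.cs4 cs4_axiom.intros)
lemma pKd: "prov L (Imp (Box (Imp a b)) (Imp (Dia a) (Dia b)))" by (intro prov.cs4 cs4_axiom.intros)
lemma pT: "prov L (Imp (Box a) a)" by (intro prov.cs4 cs4_axiom.intros)
lemma pTd: "prov L (Imp a (Dia a))" by (intro prov.cs4 cs4_axiom.intros)
lemma p4: "prov L (Imp (Box a) (Box (Box a)))" by (intro prov.cs4 cs4_axiom.intros)
lemma p4d: "prov L (Imp (Dia (Dia a)) (Dia a))" by (intro prov.cs4 cs4_axiom.intros)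

lemma der_mono: "der L \<Gamma> \<phi> \<Longrightarrow> \<Gamma> \<subseteq> \<Delta> \<Longrightarrow> der L \<Delta> \<phi>"
  by (induction rule: der.induct) (auto intro: der.intros)

lemma dax: "prov L \<phi> \<Longrightarrow> der L \<Gamma> \<phi>" by (rule dprov)

lemma mp2: "der L \<Gamma> (Imp a (Imp b c)) \<Longrightarrow> der L \<Gamma> a \<Longrightarrow> der L \<Gamma> b \<Longrightarrow> der L \<Gamma> c"
  using dmp by blast

lemma pId: "prov L (Imp a a)"
proof -
  have "prov L (Imp (Imp a (Imp (Imp a a) a)) (Imp (Imp a (Imp a a)) (Imp a a)))" by (rule pS)
  then have "prov L (Imp (Imp a (Imp a a)) (Imp a a))" using pK prov.mp by blast
  then show ?thesis using pK prov.mp by blast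
qed

lemma deduction: "der L (insert a \<Gamma>) b \<Longrightarrow> der L \<Gamma> (Imp a b)"
proof (induction "insert a \<Gamma>" b rule: der.induct)
  case (dprov \<phi>)
  then show ?case using der.dmp[OF der.dprov[OF pK]] der.dprov by blast
next
  case (dassm \<phi>)
  then show ?case
  proof (cases "\<phi> = a")
    case True then show ?thesis using der.dprov[OF pId] by blast
  next
    case False then have "\<phi> \<in> \<Gamma>" using dassm by blast
    then show ?thesis using der.dmp[OF der.dprov[OF pK]] der.dassm by blast
  qed
next
  case (dmp \<phi> \<psi>)
  then show ?case using mp2[OF der.dprov[OF pS]] by blast
qed

lemma undeduct: "der L \<Gamma> (Imp a b) \<Longrightarrow> der L (insert a \<Gamma>) b"
proof -
  assume "der L \<Gamma> (Imp a b)"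
  then have "der L (insert a \<Gamma>) (Imp a b)" by (rule der_mono) blast
  then show ?thesis using dmp dassm by blast
qed

lemma cut: "der L \<Gamma> a \<Longrightarrow> der L (insert a \<Gamma>) b \<Longrightarrow> der L \<Gamma> b"
  using deduction dmp by blast

lemma der_prov: "der L {} \<phi> \<Longrightarrow> prov L \<phi>"
  by (induction "{}::form set" \<phi> rule: der.induct) (auto intro: prov.intros)

lemma prov_der_iff: "der L {} \<phi> \<longleftrightarrow> prov L \<phi>"
  using der_prov dprov by blast

lemma der_imp_prov: "prov L (Imp a b) \<Longrightarrow> der L \<Gamma> a \<Longrightarrow> der L \<Gamma> b"
  using dmp dprov by blast

lemma conjI': "der L \<Gamma> a \<Longrightarrow> der L \<Gamma> b \<Longrightarrow> der L \<Gamma> (And a b)"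
  using mp2[OF dprov[OF pCI]] by blast
lemma conjE1: "der L \<Gamma> (And a b) \<Longrightarrow> der L \<Gamma> a" using der_imp_prov[OF pC1] by blast
lemma conjE2: "der L \<Gamma> (And a b) \<Longrightarrow> der L \<Gamma> b" using der_imp_prov[OF pC2] by blast
lemma disjI1': "der L \<Gamma> a \<Longrightarrow> der L \<Gamma> (Or a b)" using der_imp_prov[OF pD1] by blast
lemma disjI2': "der L \<Gamma> b \<Longrightarrow> der L \<Gamma> (Or a b)" using der_imp_prov[OF pD2] by blast
lemma disjE': "der L \<Gamma> (Or a b) \<Longrightarrow> der L (insert a \<Gamma>) c \<Longrightarrow> der L (insert b \<Gamma>) c \<Longrightarrow> der L \<Gamma> c"
proof -
  assume "der L \<Gamma> (Or a b)" "der L (insert a \<Gamma>) c" "der L (insert b \<Gamma>) c"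
  then show ?thesis using dmp[OF mp2[OF dprov[OF pDE]]] deduction by blast
qed
lemma botE: "der L \<Gamma> Bot \<Longrightarrow> der L \<Gamma> c" using der_imp_prov[OF pEFQ] by blast
lemma assm: "a \<in> \<Gamma> \<Longrightarrow> der L \<Gamma> a" by (rule dassm)
lemma assm1: "der L (insert a \<Gamma>) a" by (simp add: dassm)

lemma prov_imp_intro: "der L {a} b \<Longrightarrow> prov L (Imp a b)"
  using deduction der_prov by blast

lemma der_finite: "der L \<Gamma> \<phi> \<Longrightarrow> \<exists>F. finite F \<and> F \<subseteq> \<Gamma> \<and> der L F \<phi>"
proof (induction rule: der.induct)
  case dprov then show ?case by (meson der.dprov empty_subsetI finite.emptyI)
next
  case dassm then show ?case
    by (meson der.dassm empty_subsetI finite.emptyI finite.insertI insert_subset singletonI)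
next
  case (dmp \<Gamma> \<phi> \<psi>)
  then obtain F1 F2 where "finite F1" "F1 \<subseteq> \<Gamma>" "der L F1 (Imp \<phi> \<psi>)" "finite F2" "F2 \<subseteq> \<Gamma>" "der L F2 \<phi>" by blast
  then show ?case
    by (meson der.dmp der_mono finite_UnI le_sup_iff sup_ge1 sup_ge2)
qed

lemma box_mono: "prov L (Imp a b) \<Longrightarrow> prov L (Imp (Box a) (Box b))"
  using pBK prov.mp prov.nec by blast
lemma dia_mono: "prov L (Imp a b) \<Longrightarrow> prov L (Imp (Dia a) (Dia b))"
  using pKd prov.mp prov.nec by blast

fun dsj :: "form list \<Rightarrow> form" where
  "dsj [] = Bot"
| "dsj (x # xs) = Or x (dsj xs)"

fun cnj :: "form list \<Rightarrow> form" where
  "cnj [] = Imp Bot Bot"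
| "cnj (x # xs) = And x (cnj xs)"

lemma disj_mem: "x \<in> set ys \<Longrightarrow> der L \<Gamma> x \<Longrightarrow> der L \<Gamma> (dsj ys)"
  by (induction ys) (auto intro: disjI1' disjI2')

lemma disj_sub: "set xs \<subseteq> set ys \<Longrightarrow> der L \<Gamma> (dsj xs) \<Longrightarrow> der L \<Gamma> (dsj ys)"
proof (induction xs arbitrary: \<Gamma>)
  case Nil then show ?case by (simp add: botE)
next
  case (Cons x xs)
  show ?case
  proof (rule disjE')
    show "der L \<Gamma> (Or x (dsj xs))" using Cons by simp
    show "der L (insert x \<Gamma>) (dsj ys)" using Cons disj_mem[OF _ assm1] by simp
    show "der L (insert (dsj xs) \<Gamma>) (dsj ys)" using Cons by (simp add: assm1)
  qed
qed

lemma conj_der: "der L \<Gamma> (cnj xs) \<Longrightarrow> x \<in> set xs \<Longrightarrow> der L \<Gamma> x"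
  by (induction xs) (auto intro: conjE1 conjE2)

lemma conj_intro: "\<forall>x\<in>set xs. der L \<Gamma> x \<Longrightarrow> der L \<Gamma> (cnj xs)"
  by (induction xs) (auto intro: conjI' dprov pId)

lemma conj_set: "der L (set ds \<union> X) \<phi> \<Longrightarrow> der L (insert (cnj ds) X) \<phi>"
proof -
  assume a: "der L (set ds \<union> X) \<phi>"
  have "\<And>Y. der L (set ds \<union> Y) \<phi> \<Longrightarrow> der L (insert (cnj ds) Y) \<phi>"
  proof (induction ds)
    case Nil then show ?case by (simp add: der_mono subset_insertI)
  next
    case (Cons d ds Y)
    have "der L (set ds \<union> insert d Y) \<phi>" using Cons.prems by (simp add: insert_commute)
    then have "der L (insert (cnj ds) (insert d Y)) \<phi>" using Cons.IH by blast
    then have h: "der L (insert (cnj ds) (insert (cnj (d#ds)) (insert d Y))) \<phi>"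
      by (rule der_mono) blast
    have c1: "der L (insert (cnj (d#ds)) (insert d Y)) (cnj ds)"
      by (rule conjE2[of _ _ d]) (simp add: assm)
    have "der L (insert (cnj (d#ds)) (insert d Y)) \<phi>" by (rule cut[OF c1 h])
    then have h2: "der L (insert d (insert (cnj (d#ds)) Y)) \<phi>" by (simp only: insert_commute)
    have c2: "der L (insert (cnj (d#ds)) Y) d"
      by (rule conjE1[of _ _ _ "cnj ds"]) (simp add: assm)
    show ?case by (rule cut[OF c2 h2])
  qed
  then show ?thesis using a by blast
qed

lemma compact_split: "der L (Y \<union> X) \<phi> \<Longrightarrow> \<exists>ds. set ds \<subseteq> Y \<and> der L (insert (cnj ds) X) \<phi>"
proof -
  assume "der L (Y \<union> X) \<phi>"
  from der_finite[OF this] obtain F where F: "finite F" "F \<subseteq> Y \<union> X" "der L F \<phi>" by blast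
  have "finite (F \<inter> Y)" using F(1) by simp
  from finite_list[OF this] obtain ds where ds: "set ds = F \<inter> Y" by blast
  have "F \<subseteq> set ds \<union> X" using F(2) ds by blast
  then have "der L (set ds \<union> X) \<phi>" using F(3) der_mono by blast
  then have "der L (insert (cnj ds) X) \<phi>" by (rule conj_set)
  moreover have "set ds \<subseteq> Y" using ds by blast
  ultimately show ?thesis by blast
qed

definition thy :: "logic \<Rightarrow> form set \<Rightarrow> bool" where
  "thy L \<Gamma> \<longleftrightarrow> (\<forall>\<phi>. der L \<Gamma> \<phi> \<longrightarrow> \<phi> \<in> \<Gamma>)"

definition prime :: "form set \<Rightarrow> bool" where
  "prime \<Gamma> \<longleftrightarrow> (\<forall>a b. Or a b \<in> \<Gamma> \<longrightarrow> a \<in> \<Gamma> \<or> b \<in> \<Gamma>)"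

definition avoids :: "logic \<Rightarrow> form set \<Rightarrow> form set \<Rightarrow> bool" where
  "avoids L \<Delta> A \<longleftrightarrow> (\<forall>xs. set xs \<subseteq> A \<longrightarrow> \<not> der L \<Delta> (dsj xs))"

definition boxset :: "form set \<Rightarrow> form set" where
  "boxset \<Gamma> = {\<phi>. Box \<phi> \<in> \<Gamma>}"

lemma thyD: "thy L \<Gamma> \<Longrightarrow> der L \<Gamma> \<phi> \<Longrightarrow> \<phi> \<in> \<Gamma>" by (simp add: thy_def)

lemma thy_mp: "thy L \<Gamma> \<Longrightarrow> prov L (Imp a b) \<Longrightarrow> a \<in> \<Gamma> \<Longrightarrow> b \<in> \<Gamma>"
  by (rule thyD, assumption, rule der_imp_prov, assumption, rule assm)

lemma avoids_bot: "avoids L \<Delta> A \<Longrightarrow> \<not> der L \<Delta> Bot"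
  unfolding avoids_def by (drule spec[of _ "[]"]) simp

lemma avoids_mem: "avoids L \<Delta> A \<Longrightarrow> a \<in> A \<Longrightarrow> \<not> der L \<Delta> a"
  unfolding avoids_def by (drule spec[of _ "[a]"]) (auto intro: disjI1')

lemma prime_disj: "thy L \<Delta> \<Longrightarrow> prime \<Delta> \<Longrightarrow> dsj xs \<in> \<Delta> \<Longrightarrow> Bot \<in> \<Delta> \<or> (\<exists>x\<in>set xs. x \<in> \<Delta>)"
  by (induction xs) (auto simp: prime_def)

lemma lindenbaum:
  assumes "avoids L \<Gamma>0 A"
  shows "\<exists>\<Delta>. \<Gamma>0 \<subseteq> \<Delta> \<and> thy L \<Delta> \<and> prime \<Delta> \<and> avoids L \<Delta> A"
proof -
  define F where "F = {\<Delta>. \<Gamma>0 \<subseteq> \<Delta> \<and> avoids L \<Delta> A}"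
  have "\<exists>M\<in>F. \<forall>X\<in>F. M \<subseteq> X \<longrightarrow> X = M"
  proof (rule subset_Zorn_nonempty)
    have "\<Gamma>0 \<in> F" using assms unfolding F_def by simp
    then show "F \<noteq> {}" by auto
  next
    fix C assume C: "C \<noteq> {}" "subset.chain F C"
    have CF: "C \<subseteq> F" using C(2) unfolding subset.chain_def by simp
    have "\<Gamma>0 \<subseteq> \<Union>C"
    proof -
      obtain B where "B \<in> C" using C(1) by auto
      then have "\<Gamma>0 \<subseteq> B" using CF unfolding F_def by auto
      then show ?thesis using \<open>B \<in> C\<close> by auto
    qed
    moreover have "avoids L (\<Union>C) A" unfolding avoids_def
    proof (intro allI impI notI)
      fix xs assume xs: "set xs \<subseteq> A" "der L (\<Union>C) (dsj xs)"
      from der_finite[OF xs(2)] obtain G where G: "finite G" "G \<subseteq> \<Union>C" "der L G (dsj xs)" by blast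
      obtain B where B: "B \<in> C" "G \<subseteq> B" using finite_subset_Union_chain[OF G(1) G(2) C(1) C(2)] by blast
      have "der L B (dsj xs)" using der_mono[OF G(3) B(2)] .
      moreover have "avoids L B A" using B(1) CF unfolding F_def by auto
      ultimately show False using xs(1) unfolding avoids_def by simp
    qed
    ultimately show "\<Union>C \<in> F" unfolding F_def by simp
  qed
  then obtain M where MF: "M \<in> F" and max: "\<And>X. X \<in> F \<Longrightarrow> M \<subseteq> X \<Longrightarrow> X = M" by blast
  have M: "\<Gamma>0 \<subseteq> M" "avoids L M A" using MF unfolding F_def by auto
  have ins: "insert \<phi> M = M" if "avoids L (insert \<phi> M) A" for \<phi>
  proof (rule max)
    show "insert \<phi> M \<in> F" using that M(1) unfolding F_def by auto
  qed auto
  have thyM: "thy L M" unfolding thy_def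
  proof (intro allI impI)
    fix \<phi> assume d: "der L M \<phi>"
    have "avoids L (insert \<phi> M) A" unfolding avoids_def
    proof (intro allI impI notI)
      fix xs assume "set xs \<subseteq> A" "der L (insert \<phi> M) (dsj xs)"
      then have "der L M (dsj xs)" using cut[OF d] by simp
      then show False using M(2) \<open>set xs \<subseteq> A\<close> unfolding avoids_def by simp
    qed
    then have "insert \<phi> M = M" by (rule ins)
    then show "\<phi> \<in> M" by auto
  qed
  have "prime M" unfolding prime_def
  proof (intro allI impI)
    fix a b assume ab: "Or a b \<in> M"
    show "a \<in> M \<or> b \<in> M"
    proof (rule ccontr)
      assume n: "\<not> (a \<in> M \<or> b \<in> M)"
      have "\<not> avoids L (insert a M) A"
      proof
        assume "avoids L (insert a M) A"
        then have "insert a M = M" by (rule ins)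
        then show False using n by auto
      qed
      then obtain xs where xs: "set xs \<subseteq> A" "der L (insert a M) (dsj xs)" unfolding avoids_def by auto
      have "\<not> avoids L (insert b M) A"
      proof
        assume "avoids L (insert b M) A"
        then have "insert b M = M" by (rule ins)
        then show False using n by auto
      qed
      then obtain ys where ys: "set ys \<subseteq> A" "der L (insert b M) (dsj ys)" unfolding avoids_def by auto
      have "der L M (dsj (xs @ ys))"
      proof (rule disjE'[of _ _ a b])
        show "der L M (Or a b)" using ab by (rule assm)
        show "der L (insert a M) (dsj (xs @ ys))" by (rule disj_sub[OF _ xs(2)]) simp
        show "der L (insert b M) (dsj (xs @ ys))" by (rule disj_sub[OF _ ys(2)]) simp
      qed
      moreover have "set (xs @ ys) \<subseteq> A" using xs ys by simp
      ultimately show False using M(2) unfolding avoids_def by blast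
    qed
  qed
  then show ?thesis using M thyM by blast
qed

lemma boxset_der0: "der L X a \<Longrightarrow> X = boxset \<Gamma> \<Longrightarrow> thy L \<Gamma> \<Longrightarrow> Box a \<in> \<Gamma>"
proof (induction rule: der.induct)
  case (dprov \<phi> X)
  have "prov L (Box \<phi>)" using dprov(1) by (rule prov.nec)
  then have "der L \<Gamma> (Box \<phi>)" by (rule der.dprov)
  then show ?case using dprov.prems(2) by (simp add: thyD)
next
  case dassm then show ?case by (simp add: boxset_def)
next
  case (dmp X \<phi> \<psi>)
  have "der L \<Gamma> (Box \<psi>)"
    by (rule mp2[OF der.dprov[OF pBK[of L \<phi> \<psi>]] assm assm]) (use dmp in auto)
  then show ?case using dmp.prems(2) by (simp add: thyD)
qed

lemma boxset_der: "thy L \<Gamma> \<Longrightarrow> der L (boxset \<Gamma>) a \<Longrightarrow> Box a \<in> \<Gamma>"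
  by (rule boxset_der0) auto

lemma dia_der: "thy L \<Gamma> \<Longrightarrow> der L (insert a (boxset \<Gamma>)) b \<Longrightarrow> Dia a \<in> \<Gamma> \<Longrightarrow> Dia b \<in> \<Gamma>"
proof -
  assume a: "thy L \<Gamma>" "der L (insert a (boxset \<Gamma>)) b" "Dia a \<in> \<Gamma>"
  have "der L (boxset \<Gamma>) (Imp a b)" using a(2) by (rule deduction)
  then have "Box (Imp a b) \<in> \<Gamma>" using a(1) boxset_der by simp
  then have "der L \<Gamma> (Dia b)" by (rule mp2[OF der.dprov[OF pKd] assm assm]) (rule a(3))
  then show ?thesis using a(1) by (simp add: thyD)
qed


locale kmodel =
  fixes W :: "'w set" and Wb and R and S and V
  assumes bf: "bi_frame W Wb R S" and val: "valuation W Wb R V"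
begin

abbreviation sat' where "sat' w \<phi> \<equiv> sat W Wb R S V w \<phi>"

lemma Rrefl: "w \<in> W \<Longrightarrow> R w w" using bf unfolding bi_frame_def preorder_on_def by blast
lemma Rtrans: "x \<in> W \<Longrightarrow> y \<in> W \<Longrightarrow> z \<in> W \<Longrightarrow> R x y \<Longrightarrow> R y z \<Longrightarrow> R x z"
  using bf unfolding bi_frame_def preorder_on_def by blast
lemma Srefl: "w \<in> W \<Longrightarrow> S w w" using bf unfolding bi_frame_def preorder_on_def by blast
lemma Strans: "x \<in> W \<Longrightarrow> y \<in> W \<Longrightarrow> z \<in> W \<Longrightarrow> S x y \<Longrightarrow> S y z \<Longrightarrow> S x z"
  using bf unfolding bi_frame_def preorder_on_def by blast
lemma WbR: "w \<in> Wb \<Longrightarrow> v \<in> W \<Longrightarrow> R w v \<Longrightarrow> v \<in> Wb"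
  using bf unfolding bi_frame_def up_closed_def by blast
lemma VR: "w \<in> V p \<Longrightarrow> v \<in> W \<Longrightarrow> R w v \<Longrightarrow> v \<in> V p"
  using val unfolding valuation_def up_closed_def by blast

lemma hered: "w \<in> W \<Longrightarrow> v \<in> W \<Longrightarrow> R w v \<Longrightarrow> sat' w \<phi> \<Longrightarrow> sat' v \<phi>"
proof (induction \<phi> arbitrary: w v)
  case (Var x) then show ?case using VR by simp
next
  case Bot then show ?case using WbR by simp
next
  case (And \<phi>1 \<phi>2) then show ?case by simp
next
  case (Or \<phi>1 \<phi>2) then show ?case by auto
next
  case (Imp \<phi>1 \<phi>2) then show ?case using Rtrans[of w v] by (simp; blast)
next
  case (Dia \<phi>) then show ?case using Rtrans[of w v] by (simp; blast)
next
  case (Box \<phi>) then show ?case using Rtrans[of w v] by (simp; blast)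
qed

lemma bot_all: "v \<in> W \<Longrightarrow> v \<in> Wb \<Longrightarrow> sat' v \<phi>"
proof (induction \<phi> arbitrary: v)
  case (Var x) then show ?case using val unfolding valuation_def by auto
next
  case Bot then show ?case by simp
next
  case (And \<phi>1 \<phi>2) then show ?case by simp
next
  case (Or \<phi>1 \<phi>2) then show ?case by simp
next
  case (Imp \<phi>1 \<phi>2) then show ?case using WbR by simp
next
  case (Dia \<phi>)
  show ?case
  proof (simp, intro ballI impI)
    fix u assume "u \<in> W" "R v u"
    then have "u \<in> Wb" using WbR Dia.prems by blast
    then show "\<exists>x\<in>W. S u x \<and> sat' x \<phi>" using Dia.IH Srefl \<open>u \<in> W\<close> by blast
  qed
next
  case (Box \<phi>)
  show ?case
  proof (simp, intro ballI impI)
    fix u x assume "u \<in> W" "x \<in> W" "R v u" "S u x"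
    then have "u \<in> Wb" using WbR Box.prems by blast
    then have "x \<in> Wb" using bf \<open>x \<in> W\<close> \<open>S u x\<close> unfolding bi_frame_def up_closed_def by blast
    then show "sat' x \<phi>" using Box.IH \<open>x \<in> W\<close> by blast
  qed
qed

lemma ipc_sound: "ipc_axiom \<phi> \<Longrightarrow> w \<in> W \<Longrightarrow> sat' w \<phi>"
proof (induction rule: ipc_axiom.induct)
  case (ipcK \<phi> \<psi>)
  show ?case
  proof (simp, intro ballI impI)
    fix v u assume "v \<in> W" "R w v" "sat' v \<phi>" "u \<in> W" "R v u"
    then show "sat' u \<phi>" using hered by blast
  qed
next
  case (ipcS \<phi> \<psi> \<chi>)
  show ?case
  proof (simp, intro ballI impI)
    fix v u x assume a: "v \<in> W" "R w v" "u \<in> W" "R v u" "x \<in> W" "R u x"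
      and h1: "\<forall>y\<in>W. R v y \<longrightarrow> sat' y \<phi> \<longrightarrow> (\<forall>z\<in>W. R y z \<longrightarrow> sat' z \<psi> \<longrightarrow> sat' z \<chi>)"
      and h2: "\<forall>y\<in>W. R u y \<longrightarrow> sat' y \<phi> \<longrightarrow> sat' y \<psi>" and c: "sat' x \<phi>"
    have "R v x" using Rtrans a by blast
    have "sat' x \<psi>" using h2 a c by blast
    moreover have "R x x" using Rrefl a by blast
    ultimately show "sat' x \<chi>" using h1 \<open>R v x\<close> a c by blast
  qed
next
  case (ipcC1 \<phi> \<psi>) then show ?case by simp
next
  case (ipcC2 \<phi> \<psi>) then show ?case by simp
next
  case (ipcCI \<phi> \<psi>)
  show ?case
  proof (simp, intro ballI impI)
    fix v u assume "v \<in> W" "R w v" "sat' v \<phi>" "u \<in> W" "R v u"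
    then show "sat' u \<phi>" using hered by blast
  qed
next
  case (ipcD1 \<phi> \<psi>) then show ?case by simp
next
  case (ipcD2 \<phi> \<psi>) then show ?case by simp
next
  case (ipcDE \<phi> \<chi> \<psi>)
  show ?case
  proof (unfold sat.simps, intro ballI impI)
    fix v u x assume a: "v \<in> W" "R w v" "u \<in> W" "R v u" "x \<in> W" "R u x"
      and h1: "\<forall>y\<in>W. R v y \<longrightarrow> sat' y \<phi> \<longrightarrow> sat' y \<chi>"
      and h2: "\<forall>y\<in>W. R u y \<longrightarrow> sat' y \<psi> \<longrightarrow> sat' y \<chi>" and c: "sat' x \<phi> \<or> sat' x \<psi>"
    have "R v x" using Rtrans a by blast
    then show "sat' x \<chi>" using h1 h2 a c by blast
  qed
next
  case (ipcEFQ \<phi>)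
  show ?case using bot_all by simp
qed

lemma K_sound: "w \<in> W \<Longrightarrow> sat' w (Imp (Box (Imp a b)) (Imp (Box a) (Box b)))"
proof (unfold sat.simps, intro ballI impI)
  fix v u x y assume a: "w \<in> W" "v \<in> W" "R w v" "u \<in> W" "R v u" "x \<in> W" "y \<in> W" "R u x" "S x y"
    and h1: "\<forall>u\<in>W. \<forall>va\<in>W. R v u \<longrightarrow> S u va \<longrightarrow> (\<forall>v\<in>W. R va v \<longrightarrow> sat' v a \<longrightarrow> sat' v b)"
    and h2: "\<forall>ua\<in>W. \<forall>v\<in>W. R u ua \<longrightarrow> S ua v \<longrightarrow> sat' v a"
  have "R v x" using Rtrans a by blast
  have "sat' y a" using h2 a by blast
  moreover have "R y y" using Rrefl a by blast
  ultimately show "sat' y b" using h1 \<open>R v x\<close> a by blast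
qed

lemma Kd_sound: "w \<in> W \<Longrightarrow> sat' w (Imp (Box (Imp a b)) (Imp (Dia a) (Dia b)))"
proof (unfold sat.simps, intro ballI impI)
  fix v u x assume a: "w \<in> W" "v \<in> W" "R w v" "u \<in> W" "R v u" "x \<in> W" "R u x"
    and h1: "\<forall>u\<in>W. \<forall>va\<in>W. R v u \<longrightarrow> S u va \<longrightarrow> (\<forall>v\<in>W. R va v \<longrightarrow> sat' v a \<longrightarrow> sat' v b)"
    and h2: "\<forall>ua\<in>W. R u ua \<longrightarrow> (\<exists>v\<in>W. S ua v \<and> sat' v a)"
  have "R v x" using Rtrans a by blast
  obtain y where y: "y \<in> W" "S x y" "sat' y a" using h2 a by blast
  moreover have "R y y" using Rrefl y by blast
  ultimately show "\<exists>y\<in>W. S x y \<and> sat' y b" using h1 \<open>R v x\<close> a by blast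
qed

lemma T_sound: "w \<in> W \<Longrightarrow> sat' w (Imp (Box a) a)"
proof (unfold sat.simps, intro ballI impI)
  fix v assume "w \<in> W" "v \<in> W" "R w v" and h: "\<forall>u\<in>W. \<forall>va\<in>W. R v u \<longrightarrow> S u va \<longrightarrow> sat' va a"
  then show "sat' v a" using Rrefl Srefl by blast
qed

lemma Td_sound: "w \<in> W \<Longrightarrow> sat' w (Imp a (Dia a))"
proof (unfold sat.simps, intro ballI impI)
  fix v u assume "w \<in> W" "v \<in> W" "R w v" "sat' v a" "u \<in> W" "R v u"
  then have "sat' u a" using hered by blast
  then show "\<exists>x\<in>W. S u x \<and> sat' x a" using Srefl \<open>u \<in> W\<close> by blast
qed

lemma dd_sound: "w \<in> W \<Longrightarrow> sat' w (Imp (Dia (Dia a)) (Dia a))"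
proof (unfold sat.simps, intro ballI impI)
  fix v u assume a: "w \<in> W" "v \<in> W" "R w v" "u \<in> W" "R v u"
    and h: "\<forall>u\<in>W. R v u \<longrightarrow> (\<exists>x\<in>W. S u x \<and> (\<forall>ua\<in>W. R x ua \<longrightarrow> (\<exists>v\<in>W. S ua v \<and> sat' v a)))"
  obtain x where x: "x \<in> W" "S u x" "\<forall>ua\<in>W. R x ua \<longrightarrow> (\<exists>v\<in>W. S ua v \<and> sat' v a)" using h a by blast
  obtain y where y: "y \<in> W" "S x y" "sat' y a" using x Rrefl by blast
  have "S u y" using Strans x y a by blast
  then show "\<exists>x\<in>W. S u x \<and> sat' x a" using y by blast
qed

lemma four_sound:
  assumes "backward_confluent W R S \<or> downward_confluent W R S" "w \<in> W"
  shows "sat' w (Imp (Box a) (Box (Box a)))"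
proof (unfold sat.simps, intro ballI impI)
  fix v u x y z assume v: "v \<in> W" "R w v" and bx: "\<forall>u\<in>W. \<forall>x\<in>W. R v u \<longrightarrow> S u x \<longrightarrow> sat' x a"
    and u: "u \<in> W" "x \<in> W" "R v u" "S u x" "y \<in> W" "z \<in> W" "R x y" "S y z"
  show "sat' z a" using assms(1)
  proof
    assume "backward_confluent W R S"
    then obtain u' where u': "u' \<in> W" "R u u'" "S u' y" using u unfolding backward_confluent_def by blast
    have "R v u'" using Rtrans[of v u u'] u' u v by blast
    moreover have "S u' z" using Strans[of u' y z] u' u by blast
    ultimately show ?thesis using bx u' u by blast
  next
    assume "downward_confluent W R S"
    then obtain x' where "x' \<in> W" "S x x'" "R x' z" using u unfolding downward_confluent_def by blast
    moreover have "S u x'" using Strans[of u x x'] \<open>x' \<in> W\<close> \<open>S x x'\<close> u by blast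
    ultimately have "sat' x' a" using bx u v by blast
    then show ?thesis using hered \<open>x' \<in> W\<close> \<open>R x' z\<close> u by blast
  qed
qed

lemma FS_sound:
  assumes "backward_confluent W R S" "forward_confluent W R S" "w \<in> W"
  shows "sat' w (Imp (Imp (Dia a) (Box b)) (Box (Imp a b)))"
proof (unfold sat.simps, intro ballI impI)
  fix w1 u v x assume w1: "w1 \<in> W" "R w w1"
    and h: "\<forall>y\<in>W. R w1 y \<longrightarrow> (\<forall>u\<in>W. R y u \<longrightarrow> (\<exists>v\<in>W. S u v \<and> sat' v a)) \<longrightarrow>
              (\<forall>u\<in>W. \<forall>v\<in>W. R y u \<longrightarrow> S u v \<longrightarrow> sat' v b)"
    and u: "u \<in> W" "v \<in> W" "R w1 u" "S u v" "x \<in> W" "R v x" "sat' x a"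
  obtain u' where u': "u' \<in> W" "R u u'" "S u' x" using assms(1) u unfolding backward_confluent_def by blast
  have dia: "\<forall>y\<in>W. R u' y \<longrightarrow> (\<exists>z\<in>W. S y z \<and> sat' z a)"
  proof (intro ballI impI)
    fix y assume "y \<in> W" "R u' y"
    then obtain z where "z \<in> W" "R x z" "S y z" using assms(2) u' u unfolding forward_confluent_def by blast
    moreover have "sat' z a" using hered[of x z a] u \<open>z \<in> W\<close> \<open>R x z\<close> by blast
    ultimately show "\<exists>z\<in>W. S y z \<and> sat' z a" by blast
  qed
  have "R w1 u'" using Rtrans[of w1 u u'] w1 u u' by blast
  then have hb: "\<forall>u\<in>W. \<forall>v\<in>W. R u' u \<longrightarrow> S u v \<longrightarrow> sat' v b" using h u'(1) dia by blast
  have "R u' u'" using Rrefl u'(1) .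
  then show "sat' x b" using hb u'(1,3) u(5) by blast
qed

lemma DP_sound:
  assumes "forward_confluent W R S" "w \<in> W"
  shows "sat' w (Imp (Dia (Or a b)) (Or (Dia a) (Dia b)))"
proof (unfold sat.simps, intro ballI impI)
  fix v assume v: "v \<in> W" "R w v" and h: "\<forall>u\<in>W. R v u \<longrightarrow> (\<exists>x\<in>W. S u x \<and> (sat' x a \<or> sat' x b))"
  have "R v v" using Rrefl v(1) .
  then obtain x where x: "x \<in> W" "S v x" "sat' x a \<or> sat' x b" using h v by blast
  show "(\<forall>u\<in>W. R v u \<longrightarrow> (\<exists>x\<in>W. S u x \<and> sat' x a)) \<or> (\<forall>u\<in>W. R v u \<longrightarrow> (\<exists>x\<in>W. S u x \<and> sat' x b))"
    using x(3)
  proof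
    assume xa: "sat' x a"
    show ?thesis
    proof (rule disjI1, intro ballI impI)
      fix u assume "u \<in> W" "R v u"
      then obtain x' where "x' \<in> W" "R x x'" "S u x'" using assms(1) v x unfolding forward_confluent_def by blast
      then show "\<exists>x\<in>W. S u x \<and> sat' x a" using hered[of x x' a] x xa by blast
    qed
  next
    assume xa: "sat' x b"
    show ?thesis
    proof (rule disjI2, intro ballI impI)
      fix u assume "u \<in> W" "R v u"
      then obtain x' where "x' \<in> W" "R x x'" "S u x'" using assms(1) v x unfolding forward_confluent_def by blast
      then show "\<exists>x\<in>W. S u x \<and> sat' x b" using hered[of x x' b] x xa by blast
    qed
  qed
qed

lemma N_sound: "Wb = {} \<Longrightarrow> w \<in> W \<Longrightarrow> sat' w (Neg (Dia Bot))"
  unfolding Neg_def using Rrefl by simp blast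

lemma CD_sound:
  assumes "forward_confluent W R S" "downward_confluent W R S" "w \<in> W"
  shows "sat' w (Imp (Box (Or a b)) (Or (Box a) (Dia b)))"
proof (unfold sat.simps, intro ballI impI)
  fix w1 assume w1: "w1 \<in> W" "R w w1" and h: "\<forall>u\<in>W. \<forall>v\<in>W. R w1 u \<longrightarrow> S u v \<longrightarrow> sat' v a \<or> sat' v b"
  show "(\<forall>u\<in>W. \<forall>v\<in>W. R w1 u \<longrightarrow> S u v \<longrightarrow> sat' v a) \<or> (\<forall>u\<in>W. R w1 u \<longrightarrow> (\<exists>v\<in>W. S u v \<and> sat' v b))"
  proof (rule ccontr)
    assume "\<not> ?thesis"
    then obtain u1 v1 u2 where u: "u1 \<in> W" "v1 \<in> W" "R w1 u1" "S u1 v1" "\<not> sat' v1 a"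
      "u2 \<in> W" "R w1 u2" "\<forall>v\<in>W. S u2 v \<longrightarrow> \<not> sat' v b" by blast
    obtain w' where w': "w' \<in> W" "S w1 w'" "R w' v1" using assms(2) u w1 unfolding downward_confluent_def by blast
    have "\<not> sat' w' a" using hered[of w' v1 a] w' u by blast
    moreover have "R w1 w1" using Rrefl w1(1) .
    ultimately have "sat' w' b" using h w1 w' by blast
    obtain v' where "v' \<in> W" "R w' v'" "S u2 v'" using assms(1) w1 w' u unfolding forward_confluent_def by blast
    then show False using hered[of w' v' b] \<open>sat' w' b\<close> w' u by blast
  qed
qed

lemma GD_sound:
  assumes "locally_linear W R" "w \<in> W"
  shows "sat' w (Or (Imp a b) (Imp b a))"
proof (rule ccontr)
  assume "\<not> ?thesis"
  then obtain u1 u2 where u: "u1 \<in> W" "R w u1" "sat' u1 a" "\<not> sat' u1 b"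
    "u2 \<in> W" "R w u2" "sat' u2 b" "\<not> sat' u2 a" by auto
  have "R u1 u2 \<or> R u2 u1" using assms u unfolding locally_linear_def by blast
  then show False
  proof
    assume "R u1 u2" then show False using hered[of u1 u2 a] u by blast
  next
    assume "R u2 u1" then show False using hered[of u2 u1 b] u by blast
  qed
qed

end

lemma soundness:
  assumes "prov L \<phi>" "logic_frame L W Wb R S" "valuation W Wb R V" "w \<in> W"
  shows "sat W Wb R S V w \<phi>"
proof -
  have bf: "bi_frame W Wb R S" using assms(2) by (cases L) auto
  interpret kmodel W Wb R S V using bf assms(3) by unfold_locales
  have b4: "backward_confluent W R S \<or> downward_confluent W R S" using assms(2) by (cases L) auto
  show ?thesis using assms(1,4)
  proof (induction arbitrary: w rule: prov.induct)
    case (ipc \<phi>) then show ?case by (rule ipc_sound)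
  next
    case (cs4 \<phi>)
    from cs4.hyps show ?case
    proof cases
      case axK then show ?thesis using K_sound[OF cs4.prems] by (simp only:)
    next
      case axKd then show ?thesis using Kd_sound[OF cs4.prems] by (simp only:)
    next
      case axT then show ?thesis using T_sound[OF cs4.prems] by (simp only:)
    next
      case axTd then show ?thesis using Td_sound[OF cs4.prems] by (simp only:)
    next
      case ax4 then show ?thesis using four_sound[OF b4 cs4.prems] by (simp only:)
    next
      case ax4d then show ?thesis using dd_sound[OF cs4.prems] by (simp only:)
    qed
  next
    case (extra \<phi>)
    show ?case
    proof (cases L)
      case CS4 then show ?thesis using extra.hyps by simp
    next
      case GS4
      then have fr: "Wb = {}" "locally_linear W R" "forward_confluent W R S" "backward_confluent W R S"
        using assms(2) by auto
      have "FS_ax \<phi> \<or> DP_ax \<phi> \<or> N_ax \<phi> \<or> GD_ax \<phi>" using extra.hyps GS4 by simp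
      then show ?thesis
      proof (elim disjE)
        assume "FS_ax \<phi>" then obtain a b where "\<phi> = Imp (Imp (Dia a) (Box b)) (Box (Imp a b))"
          unfolding FS_ax_def by blast
        then show ?thesis using FS_sound[OF fr(4) fr(3) extra.prems] by (simp only:)
      next
        assume "DP_ax \<phi>" then obtain a b where "\<phi> = Imp (Dia (Or a b)) (Or (Dia a) (Dia b))"
          unfolding DP_ax_def by blast
        then show ?thesis using DP_sound[OF fr(3) extra.prems] by (simp only:)
      next
        assume "N_ax \<phi>" then have "\<phi> = Neg (Dia Bot)" unfolding N_ax_def by blast
        then show ?thesis using N_sound[OF fr(1) extra.prems] by (simp only:)
      next
        assume "GD_ax \<phi>" then obtain a b where "\<phi> = Or (Imp a b) (Imp b a)"
          unfolding GD_ax_def by blast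
        then show ?thesis using GD_sound[OF fr(2) extra.prems] by (simp only:)
      qed
    next
      case S4I
      then have fr: "Wb = {}" "forward_confluent W R S" "downward_confluent W R S"
        using assms(2) by auto
      have "DP_ax \<phi> \<or> N_ax \<phi> \<or> CD_ax \<phi>" using extra.hyps S4I by simp
      then show ?thesis
      proof (elim disjE)
        assume "DP_ax \<phi>" then obtain a b where "\<phi> = Imp (Dia (Or a b)) (Or (Dia a) (Dia b))"
          unfolding DP_ax_def by blast
        then show ?thesis using DP_sound[OF fr(2) extra.prems] by (simp only:)
      next
        assume "N_ax \<phi>" then have "\<phi> = Neg (Dia Bot)" unfolding N_ax_def by blast
        then show ?thesis using N_sound[OF fr(1) extra.prems] by (simp only:)
      next
        assume "CD_ax \<phi>" then obtain a b where "\<phi> = Imp (Box (Or a b)) (Or (Box a) (Dia b))"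
          unfolding CD_ax_def by blast
        then show ?thesis using CD_sound[OF fr(2) fr(3) extra.prems] by (simp only:)
      qed
    qed
  next
    case (mp \<phi> \<psi>)
    have "sat' w (Imp \<phi> \<psi>)" "sat' w \<phi>" using mp by blast+
    moreover have "R w w" using Rrefl mp.prems .
    ultimately show ?case using mp.prems by simp
  next
    case (nec \<phi>)
    show ?case
    proof (unfold sat.simps, intro ballI impI)
      fix u v assume "u \<in> W" "v \<in> W"
      then show "sat' v \<phi>" using nec.IH by blast
    qed
  qed
qed


lemma or_bot: "der L \<Gamma> (Or b Bot) \<Longrightarrow> der L \<Gamma> b"
  by (rule disjE'[of _ _ b Bot]) (auto intro: assm1 botE)

lemma avoids_single: "\<not> der L \<Gamma> b \<Longrightarrow> avoids L \<Gamma> {b}"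
  unfolding avoids_def
proof (intro allI impI notI)
  fix xs assume "\<not> der L \<Gamma> b" "set xs \<subseteq> {b}" "der L \<Gamma> (dsj xs)"
  then have "der L \<Gamma> (dsj [b])" using disj_sub[of xs "[b]"] by auto
  then show False using or_bot \<open>\<not> der L \<Gamma> b\<close> by simp
qed

lemma lind_single:
  assumes "\<not> der L \<Gamma> b"
  obtains \<Delta> where "\<Gamma> \<subseteq> \<Delta>" "thy L \<Delta>" "prime \<Delta>" "Bot \<notin> \<Delta>" "b \<notin> \<Delta>"
proof -
  from lindenbaum[OF avoids_single[OF assms]] obtain \<Delta> where
    D: "\<Gamma> \<subseteq> \<Delta>" "thy L \<Delta>" "prime \<Delta>" "avoids L \<Delta> {b}" by blast
  have "Bot \<notin> \<Delta>" using avoids_bot[OF D(4)] assm by blast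
  moreover have "b \<notin> \<Delta>" using avoids_mem[OF D(4)] assm by blast
  ultimately show ?thesis using that D by blast
qed

lemma thy_in: "thy L \<Gamma> \<Longrightarrow> der L \<Gamma> a \<longleftrightarrow> a \<in> \<Gamma>"
  using thyD assm by blast

lemma thy_and: "thy L \<Gamma> \<Longrightarrow> And a b \<in> \<Gamma> \<longleftrightarrow> a \<in> \<Gamma> \<and> b \<in> \<Gamma>"
proof -
  assume t: "thy L \<Gamma>"
  show ?thesis
  proof
    assume "And a b \<in> \<Gamma>" then show "a \<in> \<Gamma> \<and> b \<in> \<Gamma>"
      using thyD[OF t conjE1[OF assm]] thyD[OF t conjE2[OF assm]] by blast
  next
    assume "a \<in> \<Gamma> \<and> b \<in> \<Gamma>" then show "And a b \<in> \<Gamma>"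
      using thyD[OF t conjI'[OF assm assm]] by blast
  qed
qed

lemma thy_or: "thy L \<Gamma> \<Longrightarrow> prime \<Gamma> \<Longrightarrow> Or a b \<in> \<Gamma> \<longleftrightarrow> a \<in> \<Gamma> \<or> b \<in> \<Gamma>"
proof -
  assume t: "thy L \<Gamma>" and p: "prime \<Gamma>"
  show ?thesis
  proof
    assume "Or a b \<in> \<Gamma>" then show "a \<in> \<Gamma> \<or> b \<in> \<Gamma>" using p unfolding prime_def by blast
  next
    assume "a \<in> \<Gamma> \<or> b \<in> \<Gamma>" then show "Or a b \<in> \<Gamma>"
      using thyD[OF t disjI1'[OF assm]] thyD[OF t disjI2'[OF assm]] by blast
  qed
qed

lemma thy_UNIV: "thy L UNIV" unfolding thy_def by simp
lemma prime_UNIV: "prime UNIV" unfolding prime_def by simp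

lemma boxset_T: "thy L \<Gamma> \<Longrightarrow> boxset \<Gamma> \<subseteq> \<Gamma>"
  unfolding boxset_def using thy_mp[OF _ pT] by blast

lemma boxset_4: "thy L \<Gamma> \<Longrightarrow> a \<in> boxset \<Gamma> \<Longrightarrow> Box a \<in> boxset \<Gamma>"
  unfolding boxset_def using thy_mp[OF _ p4] by blast

definition WC :: "logic \<Rightarrow> (form set \<times> form option) set" where
  "WC L = {(\<Gamma>,t). thy L \<Gamma> \<and> prime \<Gamma> \<and> (\<forall>\<theta>. t = Some \<theta> \<longrightarrow> Dia \<theta> \<notin> \<Gamma>)}"
definition WbC :: "logic \<Rightarrow> (form set \<times> form option) set" where
  "WbC L = {w \<in> WC L. Bot \<in> fst w}"
definition RC :: "(form set \<times> form option) \<Rightarrow> (form set \<times> form option) \<Rightarrow> bool" where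
  "RC w v = (fst w \<subseteq> fst v)"
definition SC :: "(form set \<times> form option) \<Rightarrow> (form set \<times> form option) \<Rightarrow> bool" where
  "SC w v = (boxset (fst w) \<subseteq> fst v \<and> (\<forall>\<theta>. snd w = Some \<theta> \<longrightarrow> Dia \<theta> \<notin> fst v \<and> snd v = Some \<theta>))"
definition VC :: "logic \<Rightarrow> nat \<Rightarrow> (form set \<times> form option) set" where
  "VC L p = {w \<in> WC L. Var p \<in> fst w}"

lemma WC_iff: "(\<Gamma>,t) \<in> WC L \<longleftrightarrow> thy L \<Gamma> \<and> prime \<Gamma> \<and> (\<forall>\<theta>. t = Some \<theta> \<longrightarrow> Dia \<theta> \<notin> \<Gamma>)"
  unfolding WC_def by simp

lemma WC_fst: "w \<in> WC L \<Longrightarrow> thy L (fst w) \<and> prime (fst w) \<and> (\<forall>\<theta>. snd w = Some \<theta> \<longrightarrow> Dia \<theta> \<notin> fst w)"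
  unfolding WC_def by (cases w) simp

lemma truthC: "w \<in> WC L \<Longrightarrow> sat (WC L) (WbC L) RC SC (VC L) w \<phi> \<longleftrightarrow> \<phi> \<in> fst w"
proof (induction \<phi> arbitrary: w)
  case (Var x) then show ?case by (simp add: VC_def)
next
  case Bot then show ?case by (simp add: WbC_def)
next
  case (And \<phi>1 \<phi>2)
  obtain \<Gamma> t where w: "w = (\<Gamma>,t)" by fastforce
  have "thy L \<Gamma>" using And.prems w WC_iff by blast
  then show ?case using And w thy_and by simp
next
  case (Or \<phi>1 \<phi>2)
  obtain \<Gamma> t where w: "w = (\<Gamma>,t)" by fastforce
  have "thy L \<Gamma>" "prime \<Gamma>" using Or.prems w WC_iff by blast+
  then show ?case using Or w thy_or by simp
next
  case (Imp a b)
  obtain \<Gamma> t where w: "w = (\<Gamma>,t)" by fastforce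
  have t: "thy L \<Gamma>" "prime \<Gamma>" using Imp.prems w WC_iff by blast+
  show ?case
  proof
    assume s: "sat (WC L) (WbC L) RC SC (VC L) w (Imp a b)"
    show "Imp a b \<in> fst w"
    proof (rule ccontr)
      assume n: "Imp a b \<notin> fst w"
      have "\<not> der L (insert a \<Gamma>) b"
      proof
        assume "der L (insert a \<Gamma>) b"
        then have "der L \<Gamma> (Imp a b)" by (rule deduction)
        then have "Imp a b \<in> \<Gamma>" using thyD[OF t(1)] by blast
        then show False using n w by simp
      qed
      then obtain \<Delta> where D: "insert a \<Gamma> \<subseteq> \<Delta>" "thy L \<Delta>" "prime \<Delta>" "Bot \<notin> \<Delta>" "b \<notin> \<Delta>"
        by (rule lind_single)
      note bD = D(5)
      have DW: "(\<Delta>, None) \<in> WC L" using D WC_iff by simp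
      have "RC w (\<Delta>, None)" using D w by (simp add: RC_def)
      then have "sat (WC L) (WbC L) RC SC (VC L) (\<Delta>, None) a \<longrightarrow> sat (WC L) (WbC L) RC SC (VC L) (\<Delta>, None) b"
        using s DW unfolding sat.simps by blast
      moreover have "a \<in> \<Delta>" using D by blast
      ultimately show False using Imp.IH[OF DW] bD by simp
    qed
  next
    assume i: "Imp a b \<in> fst w"
    show "sat (WC L) (WbC L) RC SC (VC L) w (Imp a b)"
    proof (unfold sat.simps, intro ballI impI)
      fix v assume v: "v \<in> WC L" "RC w v" "sat (WC L) (WbC L) RC SC (VC L) v a"
      obtain \<Delta> u where vv: "v = (\<Delta>,u)" by fastforce
      have "thy L \<Delta>" using v vv WC_iff by blast
      moreover have "a \<in> \<Delta>" using Imp.IH[OF v(1)] v(3) vv by simp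
      moreover have "Imp a b \<in> \<Delta>" using i w v(2) vv by (auto simp: RC_def)
      ultimately have "b \<in> \<Delta>" using thyD[OF _ dmp[OF assm assm]] by blast
      then show "sat (WC L) (WbC L) RC SC (VC L) v b" using Imp.IH v vv by simp
    qed
  qed
next
  case (Box a)
  obtain \<Gamma> t where w: "w = (\<Gamma>,t)" by fastforce
  have t: "thy L \<Gamma>" "prime \<Gamma>" using Box.prems w WC_iff by blast+
  show ?case
  proof
    assume s: "sat (WC L) (WbC L) RC SC (VC L) w (Box a)"
    show "Box a \<in> fst w"
    proof (rule ccontr)
      assume n: "Box a \<notin> fst w"
      have "\<not> der L (boxset \<Gamma>) a"
      proof
        assume "der L (boxset \<Gamma>) a"
        then have "Box a \<in> \<Gamma>" using t boxset_der by blast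
        then show False using n w by simp
      qed
      then obtain \<Delta> where D: "boxset \<Gamma> \<subseteq> \<Delta>" "thy L \<Delta>" "prime \<Delta>" "Bot \<notin> \<Delta>" "a \<notin> \<Delta>"
        by (rule lind_single)
      note aD = D(5)
      have DW: "(\<Delta>, None) \<in> WC L" using D WC_iff by simp
      have GW: "(\<Gamma>, None) \<in> WC L" using t WC_iff by simp
      have "RC w (\<Gamma>, None)" using w by (simp add: RC_def)
      moreover have "SC (\<Gamma>, None) (\<Delta>, None)" using D by (simp add: SC_def)
      ultimately have "sat (WC L) (WbC L) RC SC (VC L) (\<Delta>, None) a"
        using s DW GW by simp
      then show False using Box.IH[OF DW] aD by simp
    qed
  next
    assume i: "Box a \<in> fst w"
    show "sat (WC L) (WbC L) RC SC (VC L) w (Box a)"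
    proof (unfold sat.simps, intro ballI impI)
      fix u v assume v: "u \<in> WC L" "v \<in> WC L" "RC w u" "SC u v"
      then have "a \<in> fst v" using i unfolding RC_def SC_def boxset_def by blast
      then show "sat (WC L) (WbC L) RC SC (VC L) v a" using Box.IH v by simp
    qed
  qed
next
  case (Dia a)
  obtain \<Gamma> t where w: "w = (\<Gamma>,t)" by fastforce
  have t: "thy L \<Gamma>" "prime \<Gamma>" using Dia.prems w WC_iff by blast+
  show ?case
  proof
    assume s: "sat (WC L) (WbC L) RC SC (VC L) w (Dia a)"
    show "Dia a \<in> fst w"
    proof (rule ccontr)
      assume n: "Dia a \<notin> fst w"
      have GW: "(\<Gamma>, Some a) \<in> WC L" using t n w WC_iff by simp
      have "RC w (\<Gamma>, Some a)" using w by (simp add: RC_def)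
      then obtain v where v: "v \<in> WC L" "SC (\<Gamma>, Some a) v" "sat (WC L) (WbC L) RC SC (VC L) v a"
        using s GW by auto
      then have "a \<in> fst v" using Dia.IH by simp
      moreover have "thy L (fst v)" using WC_fst[OF v(1)] by blast
      ultimately have "Dia a \<in> fst v" using thy_mp[OF _ pTd] by blast
      then show False using v(2) by (simp add: SC_def)
    qed
  next
    assume i: "Dia a \<in> fst w"
    show "sat (WC L) (WbC L) RC SC (VC L) w (Dia a)"
    proof (unfold sat.simps, intro ballI impI)
      fix u assume u: "u \<in> WC L" "RC w u"
      obtain \<Gamma>' t' where uu: "u = (\<Gamma>',t')" by fastforce
      have t': "thy L \<Gamma>'" "prime \<Gamma>'" "\<forall>\<theta>. t' = Some \<theta> \<longrightarrow> Dia \<theta> \<notin> \<Gamma>'" using u uu WC_iff by blast+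
      have aG: "Dia a \<in> \<Gamma>'" using i u uu w by (auto simp: RC_def)
      show "\<exists>v\<in>WC L. SC u v \<and> sat (WC L) (WbC L) RC SC (VC L) v a"
      proof (cases t')
        case None
        have VW: "(UNIV, None) \<in> WC L" using WC_iff thy_UNIV prime_UNIV by simp
        moreover have "SC u (UNIV, None)" using uu None by (simp add: SC_def)
        moreover have "sat (WC L) (WbC L) RC SC (VC L) (UNIV, None) a" using Dia.IH[OF VW] by simp
        ultimately show ?thesis by blast
      next
        case (Some \<theta>)
        have nt: "Dia \<theta> \<notin> \<Gamma>'" using t' Some by blast
        have "\<not> der L (insert a (boxset \<Gamma>')) (Dia \<theta>)"
        proof
          assume "der L (insert a (boxset \<Gamma>')) (Dia \<theta>)"
          then have "Dia (Dia \<theta>) \<in> \<Gamma>'" using dia_der[OF t'(1) _ aG] by blast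
          then have "Dia \<theta> \<in> \<Gamma>'" by (rule thy_mp[OF t'(1) p4d])
          then show False using nt by simp
        qed
        then obtain \<Delta> where D: "insert a (boxset \<Gamma>') \<subseteq> \<Delta>" "thy L \<Delta>" "prime \<Delta>" "Bot \<notin> \<Delta>" "Dia \<theta> \<notin> \<Delta>"
          by (rule lind_single)
        note nD = D(5)
        have DW: "(\<Delta>, Some \<theta>) \<in> WC L" using D nD WC_iff by simp
        moreover have "SC u (\<Delta>, Some \<theta>)" using uu Some D nD by (simp add: SC_def)
        moreover have "sat (WC L) (WbC L) RC SC (VC L) (\<Delta>, Some \<theta>) a" using Dia.IH[OF DW] D by simp
        ultimately show ?thesis by blast
      qed
    qed
  qed
qed

lemma frameC: "logic_frame CS4 (WC L) (WbC L) RC SC"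
proof -
  have p1: "preorder_on (WC L) RC" unfolding preorder_on_def RC_def by blast
  have p2: "preorder_on (WC L) SC" unfolding preorder_on_def
  proof (intro conjI ballI impI)
    fix x assume "x \<in> WC L"
    then have "thy L (fst x)" "\<forall>\<theta>. snd x = Some \<theta> \<longrightarrow> Dia \<theta> \<notin> fst x" using WC_fst by blast+
    then show "SC x x" unfolding SC_def using boxset_T by blast
  next
    fix x y z assume xyz: "x \<in> WC L" "y \<in> WC L" "z \<in> WC L" "SC x y" "SC y z"
    have "thy L (fst x)" using WC_fst xyz(1) by blast
    then have "boxset (fst x) \<subseteq> fst z" using xyz boxset_4 unfolding SC_def boxset_def by blast
    then show "SC x z" using xyz unfolding SC_def by auto
  qed
  have u1: "up_closed (WC L) RC (WbC L)" unfolding up_closed_def WbC_def RC_def by auto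
  have u2: "up_closed (WC L) SC (WbC L)" unfolding up_closed_def
  proof (intro ballI impI)
    fix x y assume xy: "x \<in> WbC L" "y \<in> WC L" "SC x y"
    have "x \<in> WC L" "Bot \<in> fst x" using xy unfolding WbC_def by auto
    then have "thy L (fst x)" "Bot \<in> fst x" using WC_fst by blast+
    then have "Box Bot \<in> fst x" using thy_mp[OF _ pEFQ] by blast
    then show "y \<in> WbC L" using xy unfolding WbC_def SC_def boxset_def by auto
  qed
  have bc: "backward_confluent (WC L) RC SC" unfolding backward_confluent_def
  proof (intro ballI impI)
    fix w v v' assume a: "w \<in> WC L" "v \<in> WC L" "v' \<in> WC L" "SC w v" "RC v v'"
    have "(fst w, None) \<in> WC L" using WC_fst[OF a(1)] WC_iff by simp
    moreover have "RC w (fst w, None)" by (simp add: RC_def)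
    moreover have "SC (fst w, None) v'" using a by (auto simp: SC_def RC_def)
    ultimately show "\<exists>w'\<in>WC L. RC w w' \<and> SC w' v'" by blast
  qed
  have "WbC L \<subseteq> WC L" unfolding WbC_def by auto
  then show ?thesis using p1 p2 u1 u2 bc by (simp add: bi_frame_def)
qed

lemma valC: "valuation (WC L) (WbC L) RC (VC L)"
  unfolding valuation_def
proof (intro allI conjI)
  fix p
  show "VC L p \<subseteq> WC L" unfolding VC_def by auto
  show "up_closed (WC L) RC (VC L p)" unfolding up_closed_def VC_def RC_def by auto
  show "WbC L \<subseteq> VC L p" unfolding WbC_def VC_def
  proof safe
    fix \<Gamma> t assume "(\<Gamma>,t) \<in> WC L" "Bot \<in> fst (\<Gamma>,t)"
    then show "Var p \<in> fst (\<Gamma>,t)" using thy_mp[OF _ pEFQ] WC_iff by auto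
  qed
qed

lemma completeC:
  assumes "\<not> prov CS4 \<phi>"
  shows "\<not> model_valid (WC CS4) (WbC CS4) RC SC (VC CS4) \<phi>"
proof -
  have "\<not> der CS4 {} \<phi>" using assms prov_der_iff by blast
  then obtain \<Delta> where D: "{} \<subseteq> \<Delta>" "thy CS4 \<Delta>" "prime \<Delta>" "Bot \<notin> \<Delta>" "\<phi> \<notin> \<Delta>"
    by (rule lind_single)
  have DW: "(\<Delta>, None) \<in> WC CS4" using D WC_iff by simp
  have "(\<Delta>, None) \<notin> WbC CS4" using D by (simp add: WbC_def)
  moreover have "\<phi> \<notin> \<Delta>" using D by blast
  ultimately show ?thesis using truthC[OF DW] DW unfolding model_valid_def by auto
qed


lemma lind_gen:
  assumes "avoids L \<Gamma> A"
  obtains \<Delta> where "\<Gamma> \<subseteq> \<Delta>" "thy L \<Delta>" "prime \<Delta>" "Bot \<notin> \<Delta>" "\<forall>a\<in>A. a \<notin> \<Delta>"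
proof -
  from lindenbaum[OF assms] obtain \<Delta> where
    D: "\<Gamma> \<subseteq> \<Delta>" "thy L \<Delta>" "prime \<Delta>" "avoids L \<Delta> A" by blast
  have "Bot \<notin> \<Delta>" using avoids_bot[OF D(4)] assm by blast
  moreover have "\<forall>a\<in>A. a \<notin> \<Delta>" using avoids_mem[OF D(4)] assm by blast
  ultimately show ?thesis using that D by blast
qed

lemma list_map_ex: "\<forall>y\<in>set ds. \<exists>x. y = f x \<and> P x \<Longrightarrow> \<exists>es. ds = map f es \<and> (\<forall>e\<in>set es. P e)"
proof (induction ds)
  case Nil then show ?case by simp
next
  case (Cons d ds)
  obtain x where x: "d = f x" "P x" using Cons.prems by auto
  obtain es where "ds = map f es" "\<forall>e\<in>set es. P e" using Cons by auto
  then show ?case using x by (intro exI[of _ "x # es"]) simp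
qed

lemma pDP: "L \<noteq> CS4 \<Longrightarrow> prov L (Imp (Dia (Or a b)) (Or (Dia a) (Dia b)))"
  by (cases L) (auto intro!: prov.extra simp: DP_ax_def)
lemma pN: "L \<noteq> CS4 \<Longrightarrow> prov L (Imp (Dia Bot) Bot)"
  by (cases L) (auto intro!: prov.extra simp: N_ax_def Neg_def)
lemma pFS: "prov GS4 (Imp (Imp (Dia a) (Box b)) (Box (Imp a b)))"
  by (auto intro!: prov.extra simp: FS_ax_def)
lemma pGD: "prov GS4 (Or (Imp a b) (Imp b a))"
  by (auto intro!: prov.extra simp: GD_ax_def)
lemma pCD: "prov S4I (Imp (Box (Or a b)) (Or (Box a) (Dia b)))"
  by (auto intro!: prov.extra simp: CD_ax_def)

definition WD :: "logic \<Rightarrow> form set set" where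
  "WD L = {\<Gamma>. thy L \<Gamma> \<and> prime \<Gamma> \<and> Bot \<notin> \<Gamma>}"
definition RD :: "form set \<Rightarrow> form set \<Rightarrow> bool" where
  "RD \<Gamma> \<Delta> = (\<Gamma> \<subseteq> \<Delta>)"
definition SD :: "form set \<Rightarrow> form set \<Rightarrow> bool" where
  "SD \<Gamma> \<Delta> = (boxset \<Gamma> \<subseteq> \<Delta> \<and> (\<forall>a\<in>\<Delta>. Dia a \<in> \<Gamma>))"
definition VD :: "logic \<Rightarrow> nat \<Rightarrow> form set set" where
  "VD L p = {\<Gamma> \<in> WD L. Var p \<in> \<Gamma>}"

lemma WD_iff: "\<Gamma> \<in> WD L \<longleftrightarrow> thy L \<Gamma> \<and> prime \<Gamma> \<and> Bot \<notin> \<Gamma>"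
  unfolding WD_def by simp

lemma dia_disj:
  assumes "L \<noteq> CS4" "\<Gamma> \<in> WD L"
  shows "Dia (dsj xs) \<in> \<Gamma> \<Longrightarrow> \<exists>x\<in>set xs. Dia x \<in> \<Gamma>"
proof (induction xs)
  case Nil
  have t: "thy L \<Gamma>" "Bot \<notin> \<Gamma>" using assms WD_iff by blast+
  have "Bot \<in> \<Gamma>" using thy_mp[OF t(1) pN[OF assms(1)]] Nil by simp
  then show ?case using t by blast
next
  case (Cons x xs)
  have t: "thy L \<Gamma>" "prime \<Gamma>" using assms WD_iff by blast+
  have "Or (Dia x) (Dia (dsj xs)) \<in> \<Gamma>" using thy_mp[OF t(1) pDP[OF assms(1)]] Cons.prems by simp
  then have "Dia x \<in> \<Gamma> \<or> Dia (dsj xs) \<in> \<Gamma>" using t(2) unfolding prime_def by blast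
  then show ?case using Cons.IH by auto
qed

lemma dsj_box: "der L G (dsj (map Box cs)) \<Longrightarrow> der L G (Box (dsj cs))"
proof (induction cs arbitrary: G)
  case Nil then show ?case by (simp add: botE)
next
  case (Cons c cs)
  show ?case
  proof (rule disjE'[of _ _ "Box c" "dsj (map Box cs)"])
    show "der L G (Or (Box c) (dsj (map Box cs)))" using Cons.prems by simp
    show "der L (insert (Box c) G) (Box (dsj (c # cs)))"
      using der_imp_prov[OF box_mono[OF pD1] assm1] by simp
    have "der L (insert (dsj (map Box cs)) G) (Box (dsj cs))" by (rule Cons.IH[OF assm1])
    then show "der L (insert (dsj (map Box cs)) G) (Box (dsj (c # cs)))"
      using der_imp_prov[OF box_mono[OF pD2]] by simp
  qed
qed

lemma dsj_append: "der L G (dsj (xs @ ys)) \<Longrightarrow> der L G (Or (dsj xs) (dsj ys))"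
proof (induction xs arbitrary: G)
  case Nil then show ?case by (simp add: disjI2')
next
  case (Cons x xs)
  show ?case
  proof (rule disjE'[of _ _ x "dsj (xs @ ys)"])
    show "der L G (Or x (dsj (xs @ ys)))" using Cons.prems by simp
    show "der L (insert x G) (Or (dsj (x # xs)) (dsj ys))" by (simp add: assm1 disjI1')
    have h: "der L (insert (dsj (xs @ ys)) G) (Or (dsj xs) (dsj ys))" by (rule Cons.IH[OF assm1])
    show "der L (insert (dsj (xs @ ys)) G) (Or (dsj (x # xs)) (dsj ys))"
    proof (rule disjE'[OF h])
      show "der L (insert (dsj xs) (insert (dsj (xs @ ys)) G)) (Or (dsj (x # xs)) (dsj ys))"
        by (simp add: assm1 disjI1' disjI2')
      show "der L (insert (dsj ys) (insert (dsj (xs @ ys)) G)) (Or (dsj (x # xs)) (dsj ys))"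
        by (simp add: assm1 disjI2')
    qed
  qed
qed

lemma dia_cnj: "der L G (Dia (cnj es)) \<Longrightarrow> der L G (cnj (map Dia es))"
proof -
  assume a: "der L G (Dia (cnj es))"
  show ?thesis
  proof (rule conj_intro, intro ballI)
    fix y assume "y \<in> set (map Dia es)"
    then obtain e where e: "e \<in> set es" "y = Dia e" by auto
    have "der L {cnj es} e" using conj_der[OF assm e(1)] by simp
    then have "prov L (Imp (cnj es) e)" by (rule prov_imp_intro)
    then show "der L G y" using der_imp_prov[OF dia_mono a] e by simp
  qed
qed

lemma truthD:
  assumes L: "L \<noteq> CS4"
    and boxconv: "\<And>\<Gamma> a. \<Gamma> \<in> WD L \<Longrightarrow> Box a \<notin> \<Gamma> \<Longrightarrow> \<exists>\<Gamma>'\<in>WD L. \<Gamma> \<subseteq> \<Gamma>' \<and> (\<exists>\<Delta>\<in>WD L. SD \<Gamma>' \<Delta> \<and> a \<notin> \<Delta>)"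
  shows "w \<in> WD L \<Longrightarrow> sat (WD L) {} RD SD (VD L) w \<phi> \<longleftrightarrow> \<phi> \<in> w"
proof (induction \<phi> arbitrary: w)
  case (Var x) then show ?case by (simp add: VD_def)
next
  case Bot then show ?case using WD_iff by simp
next
  case (And \<phi>1 \<phi>2)
  have "thy L w" using And.prems WD_iff by blast
  then show ?case using And thy_and by simp
next
  case (Or \<phi>1 \<phi>2)
  have "thy L w" "prime w" using Or.prems WD_iff by blast+
  then show ?case using Or thy_or by simp
next
  case (Imp a b)
  have t: "thy L w" "prime w" using Imp.prems WD_iff by blast+
  show ?case
  proof
    assume s: "sat (WD L) {} RD SD (VD L) w (Imp a b)"
    show "Imp a b \<in> w"
    proof (rule ccontr)
      assume n: "Imp a b \<notin> w"
      have "\<not> der L (insert a w) b"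
      proof
        assume "der L (insert a w) b"
        then have "der L w (Imp a b)" by (rule deduction)
        then have "Imp a b \<in> w" using thyD[OF t(1)] by blast
        then show False using n by simp
      qed
      then obtain \<Delta> where D: "insert a w \<subseteq> \<Delta>" "thy L \<Delta>" "prime \<Delta>" "Bot \<notin> \<Delta>" "b \<notin> \<Delta>"
        by (rule lind_single)
      have DW: "\<Delta> \<in> WD L" using D WD_iff by simp
      have "RD w \<Delta>" using D by (simp add: RD_def)
      then have "sat (WD L) {} RD SD (VD L) \<Delta> a \<longrightarrow> sat (WD L) {} RD SD (VD L) \<Delta> b"
        using s DW unfolding sat.simps by blast
      moreover have "a \<in> \<Delta>" using D by blast
      ultimately show False using Imp.IH[OF DW] D(5) by simp
    qed
  next
    assume i: "Imp a b \<in> w"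
    show "sat (WD L) {} RD SD (VD L) w (Imp a b)"
    proof (unfold sat.simps, intro ballI impI)
      fix v assume v: "v \<in> WD L" "RD w v" "sat (WD L) {} RD SD (VD L) v a"
      have "thy L v" using v WD_iff by blast
      moreover have "a \<in> v" using Imp.IH[OF v(1)] v(3) by simp
      moreover have "Imp a b \<in> v" using i v(2) by (auto simp: RD_def)
      ultimately have "b \<in> v" using thyD[OF _ dmp[OF assm assm]] by blast
      then show "sat (WD L) {} RD SD (VD L) v b" using Imp.IH v by simp
    qed
  qed
next
  case (Box a)
  have t: "thy L w" "prime w" using Box.prems WD_iff by blast+
  show ?case
  proof
    assume s: "sat (WD L) {} RD SD (VD L) w (Box a)"
    show "Box a \<in> w"
    proof (rule ccontr)
      assume n: "Box a \<notin> w"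
      obtain \<Gamma>' \<Delta> where G: "\<Gamma>' \<in> WD L" "w \<subseteq> \<Gamma>'" "\<Delta> \<in> WD L" "SD \<Gamma>' \<Delta>" "a \<notin> \<Delta>"
        using boxconv[OF Box.prems n] by blast
      have "RD w \<Gamma>'" using G by (simp add: RD_def)
      then have "sat (WD L) {} RD SD (VD L) \<Delta> a" using s G unfolding sat.simps by blast
      then show False using Box.IH[OF G(3)] G(5) by simp
    qed
  next
    assume i: "Box a \<in> w"
    show "sat (WD L) {} RD SD (VD L) w (Box a)"
    proof (unfold sat.simps, intro ballI impI)
      fix u v assume v: "u \<in> WD L" "v \<in> WD L" "RD w u" "SD u v"
      then have "a \<in> v" using i unfolding RD_def SD_def boxset_def by blast
      then show "sat (WD L) {} RD SD (VD L) v a" using Box.IH v by simp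
    qed
  qed
next
  case (Dia a)
  have t: "thy L w" "prime w" using Dia.prems WD_iff by blast+
  show ?case
  proof
    assume s: "sat (WD L) {} RD SD (VD L) w (Dia a)"
    show "Dia a \<in> w"
    proof (rule ccontr)
      assume n: "Dia a \<notin> w"
      have "RD w w" by (simp add: RD_def)
      moreover have "\<forall>u\<in>WD L. RD w u \<longrightarrow> (\<exists>v\<in>WD L. SD u v \<and> sat (WD L) {} RD SD (VD L) v a)"
        using s by simp
      ultimately obtain v where v: "v \<in> WD L" "SD w v" "sat (WD L) {} RD SD (VD L) v a"
        using Dia.prems by blast
      then have "a \<in> v" using Dia.IH by simp
      then have "Dia a \<in> w" using v(2) unfolding SD_def by blast
      then show False using n by simp
    qed
  next
    assume i: "Dia a \<in> w"
    show "sat (WD L) {} RD SD (VD L) w (Dia a)"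
    proof (unfold sat.simps, intro ballI impI)
      fix u assume u: "u \<in> WD L" "RD w u"
      have t': "thy L u" "prime u" "Bot \<notin> u" using u WD_iff by blast+
      have aG: "Dia a \<in> u" using i u by (auto simp: RD_def)
      have "avoids L (insert a (boxset u)) {c. Dia c \<notin> u}" unfolding avoids_def
      proof (intro allI impI notI)
        fix xs assume xs: "set xs \<subseteq> {c. Dia c \<notin> u}" "der L (insert a (boxset u)) (dsj xs)"
        have "Dia (dsj xs) \<in> u" using dia_der[OF t'(1) xs(2) aG] .
        then obtain x where "x \<in> set xs" "Dia x \<in> u" using dia_disj[OF L u(1)] by blast
        then show False using xs(1) by blast
      qed
      then obtain \<Delta> where D: "insert a (boxset u) \<subseteq> \<Delta>" "thy L \<Delta>" "prime \<Delta>" "Bot \<notin> \<Delta>"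
          "\<forall>c\<in>{c. Dia c \<notin> u}. c \<notin> \<Delta>"
        by (rule lind_gen)
      have DW: "\<Delta> \<in> WD L" using D WD_iff by simp
      moreover have "SD u \<Delta>" using D unfolding SD_def by blast
      moreover have "sat (WD L) {} RD SD (VD L) \<Delta> a" using Dia.IH[OF DW] D by simp
      ultimately show "\<exists>v\<in>WD L. SD u v \<and> sat (WD L) {} RD SD (VD L) v a" by blast
    qed
  qed
qed

lemma SD_preorder: "preorder_on (WD L) SD"
  unfolding preorder_on_def
proof (intro conjI ballI impI)
  fix x assume "x \<in> WD L"
  then have t: "thy L x" using WD_iff by blast
  have "\<forall>a\<in>x. Dia a \<in> x" using thy_mp[OF t pTd] by blast
  then show "SD x x" unfolding SD_def using boxset_T[OF t] by blast
next
  fix x y z assume xyz: "x \<in> WD L" "y \<in> WD L" "z \<in> WD L" "SD x y" "SD y z"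
  have t: "thy L x" using WD_iff xyz by blast
  have "boxset x \<subseteq> z" using xyz boxset_4[OF t] unfolding SD_def boxset_def by blast
  moreover have "\<forall>a\<in>z. Dia a \<in> x"
  proof
    fix a assume "a \<in> z"
    then have "Dia (Dia a) \<in> x" using xyz unfolding SD_def by blast
    then show "Dia a \<in> x" by (rule thy_mp[OF t p4d])
  qed
  ultimately show "SD x z" unfolding SD_def by blast
qed

lemma forwardD: assumes L: "L \<noteq> CS4" shows "forward_confluent (WD L) RD SD"
  unfolding forward_confluent_def
proof (intro ballI impI)
  fix w w' v assume a: "w \<in> WD L" "w' \<in> WD L" "v \<in> WD L" "RD w w'" "SD w v"
  have tw': "thy L w'" using a WD_iff by blast
  have tv: "thy L v" using a WD_iff by blast
  have "avoids L (v \<union> boxset w') {c. Dia c \<notin> w'}" unfolding avoids_def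
  proof (intro allI impI notI)
    fix xs assume xs: "set xs \<subseteq> {c. Dia c \<notin> w'}" "der L (v \<union> boxset w') (dsj xs)"
    from compact_split[OF xs(2)] obtain ds where ds: "set ds \<subseteq> v" "der L (insert (cnj ds) (boxset w')) (dsj xs)"
      by blast
    have "der L v (cnj ds)" using conj_intro[of ds L v] ds(1) assm by blast
    then have "cnj ds \<in> v" using thyD[OF tv] by blast
    then have "Dia (cnj ds) \<in> w'" using a unfolding SD_def RD_def by blast
    then have "Dia (dsj xs) \<in> w'" using dia_der[OF tw' ds(2)] by blast
    then obtain x where "x \<in> set xs" "Dia x \<in> w'" using dia_disj[OF L a(2)] by blast
    then show False using xs(1) by blast
  qed
  then obtain \<Delta> where D: "v \<union> boxset w' \<subseteq> \<Delta>" "thy L \<Delta>" "prime \<Delta>" "Bot \<notin> \<Delta>"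
      "\<forall>c\<in>{c. Dia c \<notin> w'}. c \<notin> \<Delta>"
    by (rule lind_gen)
  have "\<Delta> \<in> WD L" using D WD_iff by simp
  moreover have "RD v \<Delta>" using D RD_def by blast
  moreover have "SD w' \<Delta>" using D unfolding SD_def by blast
  ultimately show "\<exists>v'\<in>WD L. RD v v' \<and> SD w' v'" by blast
qed

lemma backGS4:
  assumes "\<Gamma> \<in> WD GS4" "\<Delta> \<in> WD GS4" "boxset \<Gamma> \<subseteq> \<Delta>"
  shows "\<exists>\<Gamma>'\<in>WD GS4. \<Gamma> \<subseteq> \<Gamma>' \<and> SD \<Gamma>' \<Delta>"
proof -
  have tG: "thy GS4 \<Gamma>" using assms WD_iff by blast
  have tD: "thy GS4 \<Delta>" "prime \<Delta>" "Bot \<notin> \<Delta>" using assms WD_iff by blast+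
  have "avoids GS4 (Dia ` \<Delta> \<union> \<Gamma>) (Box ` (- \<Delta>))" unfolding avoids_def
  proof (intro allI impI notI)
    fix xs assume xs: "set xs \<subseteq> Box ` (- \<Delta>)" "der GS4 (Dia ` \<Delta> \<union> \<Gamma>) (dsj xs)"
    from compact_split[OF xs(2)] obtain ds where ds: "set ds \<subseteq> Dia ` \<Delta>" "der GS4 (insert (cnj ds) \<Gamma>) (dsj xs)"
      by blast
    have "\<forall>y\<in>set ds. \<exists>x. y = Dia x \<and> x \<in> \<Delta>" using ds(1) by blast
    from list_map_ex[OF this] obtain es where es0: "ds = map Dia es" "\<forall>e\<in>set es. e \<in> \<Delta>" by blast
    have es: "ds = map Dia es" "set es \<subseteq> \<Delta>" using es0 by auto
    have "\<forall>y\<in>set xs. \<exists>x. y = Box x \<and> x \<notin> \<Delta>" using xs(1) by blast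
    from list_map_ex[OF this] obtain cs where cs0: "xs = map Box cs" "\<forall>e\<in>set cs. e \<notin> \<Delta>" by blast
    have cs: "xs = map Box cs" "set cs \<subseteq> - \<Delta>" using cs0 by auto
    let ?d = "cnj es"
    have "der GS4 (insert (Dia ?d) \<Gamma>) (cnj ds)"
      using dia_cnj[OF assm1] es(1) by simp
    moreover have "der GS4 (insert (cnj ds) (insert (Dia ?d) \<Gamma>)) (dsj xs)"
      by (rule der_mono[OF ds(2)]) blast
    ultimately have "der GS4 (insert (Dia ?d) \<Gamma>) (dsj xs)" by (rule cut)
    then have "der GS4 (insert (Dia ?d) \<Gamma>) (Box (dsj cs))" using dsj_box cs(1) by simp
    then have "der GS4 \<Gamma> (Imp (Dia ?d) (Box (dsj cs)))" by (rule deduction)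
    then have "der GS4 \<Gamma> (Box (Imp ?d (dsj cs)))" using der_imp_prov[OF pFS] by blast
    then have "Imp ?d (dsj cs) \<in> \<Delta>" using thyD[OF tG] assms(3) unfolding boxset_def by blast
    moreover have "?d \<in> \<Delta>" using thyD[OF tD(1) conj_intro[of es GS4 \<Delta>]] es(2) assm by blast
    ultimately have "dsj cs \<in> \<Delta>" using thyD[OF tD(1) dmp[OF assm assm]] by blast
    then have "Bot \<in> \<Delta> \<or> (\<exists>x\<in>set cs. x \<in> \<Delta>)" using prime_disj[OF tD(1) tD(2)] by blast
    then show False using tD(3) cs(2) by blast
  qed
  then obtain G where G: "Dia ` \<Delta> \<union> \<Gamma> \<subseteq> G" "thy GS4 G" "prime G" "Bot \<notin> G"
      "\<forall>c\<in>Box ` (- \<Delta>). c \<notin> G"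
    by (rule lind_gen)
  have "G \<in> WD GS4" using G WD_iff by simp
  moreover have "\<Gamma> \<subseteq> G" using G by blast
  moreover have "boxset G \<subseteq> \<Delta>" using G(5) unfolding boxset_def by blast
  moreover have "\<forall>a\<in>\<Delta>. Dia a \<in> G" using G(1) by blast
  ultimately show ?thesis unfolding SD_def by blast
qed

lemma downS4I:
  assumes "\<Gamma> \<in> WD S4I" "\<Delta>' \<in> WD S4I" "boxset \<Gamma> \<subseteq> \<Delta>'"
  shows "\<exists>\<Delta>\<in>WD S4I. SD \<Gamma> \<Delta> \<and> \<Delta> \<subseteq> \<Delta>'"
proof -
  have tG: "thy S4I \<Gamma>" "prime \<Gamma>" using assms WD_iff by blast+
  have tD: "thy S4I \<Delta>'" "prime \<Delta>'" "Bot \<notin> \<Delta>'" using assms WD_iff by blast+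
  let ?A = "(- \<Delta>') \<union> {c. Dia c \<notin> \<Gamma>}"
  have "avoids S4I (boxset \<Gamma>) ?A" unfolding avoids_def
  proof (intro allI impI notI)
    fix xs assume xs: "set xs \<subseteq> ?A" "der S4I (boxset \<Gamma>) (dsj xs)"
    let ?x1 = "filter (\<lambda>x. x \<notin> \<Delta>') xs" and ?x2 = "filter (\<lambda>x. x \<in> \<Delta>') xs"
    have "set xs \<subseteq> set (?x1 @ ?x2)" by auto
    then have "der S4I (boxset \<Gamma>) (dsj (?x1 @ ?x2))" using disj_sub xs(2) by blast
    then have "der S4I (boxset \<Gamma>) (Or (dsj ?x1) (dsj ?x2))" by (rule dsj_append)
    then have "Box (Or (dsj ?x1) (dsj ?x2)) \<in> \<Gamma>" using boxset_der[OF tG(1)] by blast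
    then have "Or (Box (dsj ?x1)) (Dia (dsj ?x2)) \<in> \<Gamma>" by (rule thy_mp[OF tG(1) pCD])
    then have "Box (dsj ?x1) \<in> \<Gamma> \<or> Dia (dsj ?x2) \<in> \<Gamma>" using tG(2) unfolding prime_def by blast
    then show False
    proof
      assume "Box (dsj ?x1) \<in> \<Gamma>"
      then have "dsj ?x1 \<in> \<Delta>'" using assms(3) unfolding boxset_def by blast
      then have "Bot \<in> \<Delta>' \<or> (\<exists>x\<in>set ?x1. x \<in> \<Delta>')" using prime_disj[OF tD(1) tD(2)] by blast
      then show False using tD(3) by auto
    next
      assume h: "Dia (dsj ?x2) \<in> \<Gamma>"
      have "S4I \<noteq> CS4" by simp
      from dia_disj[OF this assms(1) h] have "\<exists>x\<in>set ?x2. Dia x \<in> \<Gamma>" .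
      then obtain x where "x \<in> set ?x2" "Dia x \<in> \<Gamma>" by blast
      then show False using xs(1) by auto
    qed
  qed
  then obtain \<Delta> where D: "boxset \<Gamma> \<subseteq> \<Delta>" "thy S4I \<Delta>" "prime \<Delta>" "Bot \<notin> \<Delta>" "\<forall>c\<in>?A. c \<notin> \<Delta>"
    by (rule lind_gen)
  have "\<Delta> \<in> WD S4I" using D WD_iff by simp
  moreover have "SD \<Gamma> \<Delta>" using D unfolding SD_def by blast
  moreover have "\<Delta> \<subseteq> \<Delta>'" using D by blast
  ultimately show ?thesis by blast
qed

lemma boxconvD:
  assumes L: "L \<noteq> CS4" and G: "\<Gamma> \<in> WD L" and n: "Box a \<notin> \<Gamma>"
  shows "\<exists>\<Gamma>'\<in>WD L. \<Gamma> \<subseteq> \<Gamma>' \<and> (\<exists>\<Delta>\<in>WD L. SD \<Gamma>' \<Delta> \<and> a \<notin> \<Delta>)"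
proof -
  have t: "thy L \<Gamma>" using G WD_iff by blast
  have "\<not> der L (boxset \<Gamma>) a" using boxset_der[OF t] n by blast
  then obtain \<Delta> where D: "boxset \<Gamma> \<subseteq> \<Delta>" "thy L \<Delta>" "prime \<Delta>" "Bot \<notin> \<Delta>" "a \<notin> \<Delta>"
    by (rule lind_single)
  have DW: "\<Delta> \<in> WD L" using D WD_iff by simp
  show ?thesis
  proof (cases L)
    case CS4 then show ?thesis using L by simp
  next
    case GS4
    then obtain G' where "G' \<in> WD L" "\<Gamma> \<subseteq> G'" "SD G' \<Delta>" using backGS4 G DW D(1) by blast
    then show ?thesis using DW D(5) by blast
  next
    case S4I
    then obtain \<Delta>0 where "\<Delta>0 \<in> WD L" "SD \<Gamma> \<Delta>0" "\<Delta>0 \<subseteq> \<Delta>" using downS4I G DW D(1) by blast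
    then show ?thesis using G D(5) by blast
  qed
qed

lemma frameD: assumes "L \<noteq> CS4" shows "logic_frame L (WD L) {} RD SD"
proof -
  have p1: "preorder_on (WD L) RD" unfolding preorder_on_def RD_def by blast
  have bf: "bi_frame (WD L) {} RD SD" using p1 SD_preorder by (simp add: bi_frame_def up_closed_def)
  have fc: "forward_confluent (WD L) RD SD" using forwardD[OF assms] .
  show ?thesis
  proof (cases L)
    case CS4 then show ?thesis using assms by simp
  next
    case GS4
    have ll: "locally_linear (WD L) RD" unfolding locally_linear_def
    proof (intro ballI impI)
      fix w u v assume a: "w \<in> WD L" "u \<in> WD L" "v \<in> WD L" "RD w u" "RD w v"
      show "RD u v \<or> RD v u"
      proof (rule ccontr)
        assume "\<not> (RD u v \<or> RD v u)"
        then obtain p q where pq: "p \<in> u" "p \<notin> v" "q \<in> v" "q \<notin> u" unfolding RD_def by blast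
        have tw: "thy L w" "prime w" using a WD_iff by blast+
        have tu: "thy L u" "thy L v" using a WD_iff by blast+
        have "Or (Imp p q) (Imp q p) \<in> w" using thyD[OF tw(1) dprov] pGD GS4 by blast
        then have "Imp p q \<in> w \<or> Imp q p \<in> w" using tw(2) unfolding prime_def by blast
        then show False
        proof
          assume "Imp p q \<in> w"
          then have "Imp p q \<in> u" using a RD_def by blast
          then have "q \<in> u" using thyD[OF tu(1) dmp[OF assm assm]] pq by blast
          then show False using pq by blast
        next
          assume "Imp q p \<in> w"
          then have "Imp q p \<in> v" using a RD_def by blast
          then have "p \<in> v" using thyD[OF tu(2) dmp[OF assm assm]] pq by blast
          then show False using pq by blast
        qed
      qed
    qed
    have bc: "backward_confluent (WD L) RD SD" unfolding backward_confluent_def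
    proof (intro ballI impI)
      fix w v v' assume a: "w \<in> WD L" "v \<in> WD L" "v' \<in> WD L" "SD w v" "RD v v'"
      have "boxset w \<subseteq> v'" using a unfolding SD_def RD_def by blast
      then obtain w' where "w' \<in> WD L" "w \<subseteq> w'" "SD w' v'" using backGS4 a GS4 by blast
      then show "\<exists>w'\<in>WD L. RD w w' \<and> SD w' v'" unfolding RD_def by blast
    qed
    show ?thesis using GS4 bf ll fc bc by simp
  next
    case S4I
    have dc: "downward_confluent (WD L) RD SD" unfolding downward_confluent_def
    proof (intro ballI impI)
      fix w v v' assume a: "w \<in> WD L" "v \<in> WD L" "v' \<in> WD L" "RD w v" "SD v v'"
      have "boxset w \<subseteq> v'" using a unfolding SD_def RD_def boxset_def by blast
      then obtain w' where "w' \<in> WD L" "SD w w'" "w' \<subseteq> v'" using downS4I a S4I by blast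
      then show "\<exists>w'\<in>WD L. SD w w' \<and> RD w' v'" unfolding RD_def by blast
    qed
    show ?thesis using S4I bf fc dc by simp
  qed
qed

lemma valD: "valuation (WD L) {} RD (VD L)"
  unfolding valuation_def up_closed_def VD_def RD_def by auto

lemma completeD:
  assumes "L \<noteq> CS4" "\<not> prov L \<phi>"
  shows "\<not> model_valid (WD L) {} RD SD (VD L) \<phi>"
proof -
  have "\<not> der L {} \<phi>" using assms prov_der_iff by blast
  then obtain \<Delta> where D: "{} \<subseteq> \<Delta>" "thy L \<Delta>" "prime \<Delta>" "Bot \<notin> \<Delta>" "\<phi> \<notin> \<Delta>"
    by (rule lind_single)
  have DW: "\<Delta> \<in> WD L" using D WD_iff by simp
  have "\<not> sat (WD L) {} RD SD (VD L) \<Delta> \<phi>"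
    using truthD[OF assms(1) boxconvD[OF assms(1)] DW] D by simp
  then show ?thesis using DW unfolding model_valid_def by auto
qed


lemma ball_img: "(\<forall>x\<in>f ` A. P x) = (\<forall>a\<in>A. P (f a))" by auto
lemma bex_img: "(\<exists>x\<in>f ` A. P x) = (\<exists>a\<in>A. P (f a))" by auto

lemma transfer:
  fixes f :: "'a \<Rightarrow> 'b" and W :: "'a set"
  assumes inj: "inj_on f W" and fr: "logic_frame L W Wb R S" and val: "valuation W Wb R V"
    and nv: "\<not> model_valid W Wb R S V \<phi>"
  shows "\<not> valid_in TYPE('b) L \<phi>"
proof -
  define g where "g = inv_into W f"
  define R' where "R' = (\<lambda>x y. R (g x) (g y))"
  define S' where "S' = (\<lambda>x y. S (g x) (g y))"
  define V' where "V' = (\<lambda>p. f ` V p)"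
  have gf: "\<And>a. a \<in> W \<Longrightarrow> g (f a) = a" unfolding g_def using inj by (simp add: inv_into_f_f)
  have R'f: "\<And>a b. a \<in> W \<Longrightarrow> b \<in> W \<Longrightarrow> R' (f a) (f b) = R a b" using gf R'_def by simp
  have S'f: "\<And>a b. a \<in> W \<Longrightarrow> b \<in> W \<Longrightarrow> S' (f a) (f b) = S a b" using gf S'_def by simp
  have bf: "bi_frame W Wb R S" using fr by (cases L) auto
  have WbW: "Wb \<subseteq> W" using bf unfolding bi_frame_def by blast
  have VW: "\<And>p. V p \<subseteq> W" using val unfolding valuation_def by blast
  have memWb: "\<And>a. a \<in> W \<Longrightarrow> f a \<in> f ` Wb \<longleftrightarrow> a \<in> Wb"
    using inj WbW by (simp add: inj_on_image_mem_iff)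
  have memV: "\<And>a p. a \<in> W \<Longrightarrow> f a \<in> f ` V p \<longleftrightarrow> a \<in> V p"
    using inj VW by (simp add: inj_on_image_mem_iff)
  have satf: "w \<in> W \<Longrightarrow> sat (f ` W) (f ` Wb) R' S' V' (f w) \<psi> = sat W Wb R S V w \<psi>" for w \<psi>
  proof (induction \<psi> arbitrary: w)
    case (Var x) then show ?case using memV V'_def by simp
  next
    case Bot then show ?case using memWb by simp
  next
    case (And \<psi>1 \<psi>2) then show ?case by simp
  next
    case (Or \<psi>1 \<psi>2) then show ?case by simp
  next
    case (Imp \<psi>1 \<psi>2)
    have "sat (f ` W) (f ` Wb) R' S' V' (f w) (Imp \<psi>1 \<psi>2) =
      (\<forall>v\<in>W. R' (f w) (f v) \<longrightarrow> sat (f ` W) (f ` Wb) R' S' V' (f v) \<psi>1 \<longrightarrow> sat (f ` W) (f ` Wb) R' S' V' (f v) \<psi>2)"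
      by (simp add: ball_img)
    also have "\<dots> = (\<forall>v\<in>W. R w v \<longrightarrow> sat W Wb R S V v \<psi>1 \<longrightarrow> sat W Wb R S V v \<psi>2)"
      using Imp R'f by (auto)
    finally show ?case by simp
  next
    case (Dia \<psi>)
    have "sat (f ` W) (f ` Wb) R' S' V' (f w) (Dia \<psi>) =
      (\<forall>u\<in>W. R' (f w) (f u) \<longrightarrow> (\<exists>v\<in>W. S' (f u) (f v) \<and> sat (f ` W) (f ` Wb) R' S' V' (f v) \<psi>))"
      by (simp add: ball_img bex_img)
    also have "\<dots> = (\<forall>u\<in>W. R w u \<longrightarrow> (\<exists>v\<in>W. S u v \<and> sat W Wb R S V v \<psi>))"
      using Dia R'f S'f by (auto)
    finally show ?case by simp
  next
    case (Box \<psi>)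
    have "sat (f ` W) (f ` Wb) R' S' V' (f w) (Box \<psi>) =
      (\<forall>u\<in>W. \<forall>v\<in>W. R' (f w) (f u) \<longrightarrow> S' (f u) (f v) \<longrightarrow> sat (f ` W) (f ` Wb) R' S' V' (f v) \<psi>)"
      by (simp add: ball_img)
    also have "\<dots> = (\<forall>u\<in>W. \<forall>v\<in>W. R w u \<longrightarrow> S u v \<longrightarrow> sat W Wb R S V v \<psi>)"
      using Box R'f S'f by (auto)
    finally show ?case by simp
  qed
  have pre: "preorder_on (f ` W) Q' = preorder_on W Q"
    if "\<And>a b. a \<in> W \<Longrightarrow> b \<in> W \<Longrightarrow> Q' (f a) (f b) = Q a b" for Q Q'
    unfolding preorder_on_def using that by (simp add: ball_img)
  have upc: "up_closed (f ` W) Q' (f ` A) = up_closed W Q A"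
    if "\<And>a b. a \<in> W \<Longrightarrow> b \<in> W \<Longrightarrow> Q' (f a) (f b) = Q a b" "A \<subseteq> W" for Q Q' A
  proof -
    have m: "\<And>a. a \<in> W \<Longrightarrow> f a \<in> f ` A \<longleftrightarrow> a \<in> A" using inj that(2) by (simp add: inj_on_image_mem_iff)
    show ?thesis unfolding up_closed_def using that m by (auto simp: ball_img)
  qed
  have bf': "bi_frame (f ` W) (f ` Wb) R' S'"
    using bf WbW unfolding bi_frame_def
    by (simp add: pre[where Q=R and Q'=R', OF R'f] pre[where Q=S and Q'=S', OF S'f] upc[where Q=R and Q'=R' and A=Wb, OF R'f WbW] upc[where Q=S and Q'=S' and A=Wb, OF S'f WbW] image_mono)
  have fc: "forward_confluent (f ` W) R' S' = forward_confluent W R S"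
    unfolding forward_confluent_def using R'f S'f by (auto simp: ball_img bex_img)
  have bc: "backward_confluent (f ` W) R' S' = backward_confluent W R S"
    unfolding backward_confluent_def using R'f S'f by (auto simp: ball_img bex_img)
  have dc: "downward_confluent (f ` W) R' S' = downward_confluent W R S"
    unfolding downward_confluent_def using R'f S'f by (auto simp: ball_img bex_img)
  have ll: "locally_linear (f ` W) R' = locally_linear W R"
    unfolding locally_linear_def using R'f by (auto simp: ball_img)
  have fr': "logic_frame L (f ` W) (f ` Wb) R' S'"
    using fr bf' fc bc dc ll by (cases L) auto
  have val': "valuation (f ` W) (f ` Wb) R' V'"
    unfolding valuation_def
  proof (intro allI conjI)
    fix p
    show "V' p \<subseteq> f ` W" using VW V'_def by auto
    show "up_closed (f ` W) R' (V' p)" using upc[where Q=R and Q'=R', OF R'f VW] val V'_def unfolding valuation_def by simp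
    show "f ` Wb \<subseteq> V' p" using val V'_def unfolding valuation_def by auto
  qed
  obtain w where w: "w \<in> W" "w \<notin> Wb" "\<not> sat W Wb R S V w \<phi>" using nv unfolding model_valid_def by blast
  have "f w \<in> f ` W - f ` Wb" using w memWb by auto
  moreover have "\<not> sat (f ` W) (f ` Wb) R' S' V' (f w) \<phi>" using satf w by simp
  ultimately have "\<not> model_valid (f ` W) (f ` Wb) R' S' V' \<phi>" unfolding model_valid_def by blast
  then show ?thesis using fr' val' unfolding valid_in_def by blast
qed


lemma sound_valid: "prov L \<phi> \<Longrightarrow> valid_in (T :: 'x itself) L \<phi>"
  unfolding valid_in_def model_valid_def
proof (intro allI impI ballI)
  fix W :: "'x set" and Wb R S V w
  assume "prov L \<phi>" "logic_frame L W Wb R S" "valuation W Wb R V" "w \<in> W - Wb"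
  then show "sat W Wb R S V w \<phi>" using soundness[of L \<phi> W Wb R S V w] by blast
qed

definition encC :: "form set \<times> form option \<Rightarrow> form set set" where
  "encC w = {Box ` fst w, Dia ` set_option (snd w)}"

lemma encC_box: "\<Union>(encC w) \<inter> range Box = Box ` fst w"
proof
  show "\<Union>(encC w) \<inter> range Box \<subseteq> Box ` fst w" unfolding encC_def by auto
  show "Box ` fst w \<subseteq> \<Union>(encC w) \<inter> range Box" unfolding encC_def by auto
qed

lemma encC_dia: "\<Union>(encC w) \<inter> range Dia = Dia ` set_option (snd w)"
proof
  show "\<Union>(encC w) \<inter> range Dia \<subseteq> Dia ` set_option (snd w)" unfolding encC_def by auto
  show "Dia ` set_option (snd w) \<subseteq> \<Union>(encC w) \<inter> range Dia" unfolding encC_def by auto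
qed

lemma inj_Box: "inj Box" by (rule injI) simp
lemma inj_Dia: "inj Dia" by (rule injI) simp

lemma set_option_inj: "set_option a = set_option b \<Longrightarrow> a = b"
  by (cases a; cases b) auto

lemma inj_encC: "inj_on encC X"
proof (rule inj_onI)
  fix x y assume e: "encC x = encC y"
  have "Box ` fst x = Box ` fst y" using encC_box[of x] encC_box[of y] e by simp
  then have 1: "fst x = fst y" using inj_image_eq_iff[OF inj_Box] by blast
  have "Dia ` set_option (snd x) = Dia ` set_option (snd y)" using encC_dia[of x] encC_dia[of y] e by simp
  then have "set_option (snd x) = set_option (snd y)" using inj_image_eq_iff[OF inj_Dia] by blast
  then have 2: "snd x = snd y" by (rule set_option_inj)
  show "x = y" using 1 2 by (simp add: prod_eq_iff)
qed

lemma inj_single: "inj_on (\<lambda>x. {x}) X" by (rule inj_onI) simp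

theorem mainTheorem4:
  assumes "L \<in> {CS4, GS4, S4I}"
  shows "(prov L \<phi> \<longrightarrow> valid_in TYPE('w) L \<phi>) \<and>
         (prov L \<phi> \<longleftrightarrow> valid_in TYPE(form set set) L \<phi>)"
proof -
  have c: "\<not> prov L \<phi> \<Longrightarrow> \<not> valid_in TYPE(form set set) L \<phi>"
  proof -
    assume n: "\<not> prov L \<phi>"
    show ?thesis
    proof (cases "L = CS4")
      case True
      have n': "\<not> prov CS4 \<phi>" using n True by simp
      have "\<not> valid_in TYPE(form set set) CS4 \<phi>"
        by (rule transfer[OF inj_encC frameC valC completeC[OF n']])
      then show ?thesis using True by simp
    next
      case False
      show ?thesis by (rule transfer[OF inj_single frameD[OF False] valD completeD[OF False n]])
    qed
  qed
  have s1: "prov L \<phi> \<longrightarrow> valid_in TYPE('w) L \<phi>" by (intro impI) (rule sound_valid)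
  have s2: "prov L \<phi> \<longrightarrow> valid_in TYPE(form set set) L \<phi>" by (intro impI) (rule sound_valid)
  show ?thesis using s1 s2 c by blast
qed


end
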